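(* Let $\mathcal M_\bullet=(B,\sigma,\alpha,b_\bullet)$ be a rooted map, let $S$ be (the edge set of) a spanning tree of $G(\mathcal M)$, and let $w$ be the associated double occurrence word. Then $S$ has the Trémaux property if and only if no edge $f$ has both an in-neighbor in $S$ and an out-neighbor in $S$ in $\vec{\Lambda}(w)$; equivalently, if and only if $w$ does not contain (as a subsequence) a pattern $e_1\,f\,e_1\,e_2\,f\,e_2$ with $e_1,e_2\in S$.
   Context: A map is a triple $\mathcal M=(B,\sigma,\alpha)$ with $B$ finite, $\sigma,\alpha\in\mathrm{Sym}(B)$, $\alpha$ a fixed-point-free involution, $\langle\sigma,\alpha\rangle$ transitive on $B$; a rooted map additionally has a root flag $b_\bullet\in B$. Edges are the cycles of $\alpha$; $\underline b=\{b,\alpha(b)\}$. The underlying graph $G(\mathcal M)$ has vertex set the cycles of $\sigma$, edge set the cycles of $\alpha$, $e$ incident to $v$ iff $e\cap v\neq\emptyset$. The tour of a set $F$ of edges is $\tau$ with $\tau(b)=\sigma(\alpha(b))$ if $\underline b\in F$ and $\tau(b)=\sigma(b)$ otherwise; for a spanning tree $S$, its tour $\tau$ is a single cycle on $B$, and the associated double occurrence word is $w=\underline{b_\bullet}\,\underline{\tau(b_\bullet)}\,\underline{\tau^2(b_\bullet)}\cdots\underline{\tau^{|B|-1}(b_\bullet)}$, a word on the alphabet of edges using each edge exactly twice. $\vec\Lambda(w)$ is the directed graph on the letters of $w$ with an arc $e\to f$ whenever $e\,f\,e\,f$ is a subsequence of $w$. $S$ has the Trémaux property if, rooting the tree $S$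 at the vertex (cycle of $\sigma$) containing $b_\bullet$, for every edge of $G(\mathcal M)$ its two end vertices lie on a common path from the root towards a leaf of $S$ (i.e. one is an ancestor of the other). *)

theory Defs
  imports Main "HOL-Combinatorics.Permutations" "HOL-Library.Sublist"
begin

definition is_map :: "'b set \<Rightarrow> ('b \<Rightarrow> 'b) \<Rightarrow> ('b \<Rightarrow> 'b) \<Rightarrow> bool" where
  "is_map B \<sigma> \<alpha> \<longleftrightarrow> finite B \<and> \<sigma> permutes B \<and> \<alpha> permutes B \<and>
     (\<forall>b\<in>B. \<alpha> b \<noteq> b \<and> \<alpha> (\<alpha> b) = b) \<and>
     (\<forall>x\<in>B. \<forall>y\<in>B. (x, y) \<in>
        ({(b, \<sigma> b) | b. b \<in> B} \<union> {(b, \<alpha> b) | b. b \<in> B}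
         \<union> {(\<sigma> b, b) | b. b \<in> B} \<union> {(\<alpha> b, b) | b. b \<in> B})\<^sup>*)"

definition edge_of :: "('b \<Rightarrow> 'b) \<Rightarrow> 'b \<Rightarrow> 'b set" where
  "edge_of \<alpha> b = {b, \<alpha> b}"

definition vertex_of :: "('b \<Rightarrow> 'b) \<Rightarrow> 'b \<Rightarrow> 'b set" where
  "vertex_of \<sigma> b = {(\<sigma> ^^ n) b | n. True}"

definition map_edges :: "'b set \<Rightarrow> ('b \<Rightarrow> 'b) \<Rightarrow> 'b set set" where
  "map_edges B \<alpha> = edge_of \<alpha> ` B"

definition map_vertices :: "'b set \<Rightarrow> ('b \<Rightarrow> 'b) \<Rightarrow> 'b set set" where
  "map_vertices B \<sigma> = vertex_of \<sigma> ` B"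

definition adj :: "'b set \<Rightarrow> ('b \<Rightarrow> 'b) \<Rightarrow> ('b \<Rightarrow> 'b) \<Rightarrow> 'b set set \<Rightarrow> ('b set \<times> 'b set) set" where
  "adj B \<sigma> \<alpha> F = {(vertex_of \<sigma> b, vertex_of \<sigma> (\<alpha> b)) | b. b \<in> B \<and> edge_of \<alpha> b \<in> F}"

text \<open>Spanning tree of the (multi)graph G(M): a set of edges that is connected and
spanning, and acyclic (every edge of it is a bridge: removing it disconnects its ends;
loops are thereby excluded).\<close>
definition spanning_tree :: "'b set \<Rightarrow> ('b \<Rightarrow> 'b) \<Rightarrow> ('b \<Rightarrow> 'b) \<Rightarrow> 'b set set \<Rightarrow> bool" where
  "spanning_tree B \<sigma> \<alpha> S \<longleftrightarrow> S \<subseteq> map_edges B \<alpha> \<and>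
     (\<forall>u\<in>map_vertices B \<sigma>. \<forall>v\<in>map_vertices B \<sigma>. (u, v) \<in> (adj B \<sigma> \<alpha> S)\<^sup>*) \<and>
     (\<forall>b\<in>B. edge_of \<alpha> b \<in> S \<longrightarrow>
        (vertex_of \<sigma> b, vertex_of \<sigma> (\<alpha> b)) \<notin> (adj B \<sigma> \<alpha> (S - {edge_of \<alpha> b}))\<^sup>*)"

definition tour :: "('b \<Rightarrow> 'b) \<Rightarrow> ('b \<Rightarrow> 'b) \<Rightarrow> 'b set set \<Rightarrow> 'b \<Rightarrow> 'b" where
  "tour \<sigma> \<alpha> F b = (if edge_of \<alpha> b \<in> F then \<sigma> (\<alpha> b) else \<sigma> b)"

definition dow :: "'b set \<Rightarrow> ('b \<Rightarrow> 'b) \<Rightarrow> ('b \<Rightarrow> 'b) \<Rightarrow> 'b \<Rightarrow> 'b set set \<Rightarrow> 'b set list" where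
  "dow B \<sigma> \<alpha> r F = map (\<lambda>i. edge_of \<alpha> ((tour \<sigma> \<alpha> F ^^ i) r)) [0..<card B]"

definition Lambda_arc :: "'a list \<Rightarrow> 'a \<Rightarrow> 'a \<Rightarrow> bool" where
  "Lambda_arc w e f \<longleftrightarrow> subseq [e, f, e, f] w"

definition is_path :: "('v \<times> 'v) set \<Rightarrow> 'v \<Rightarrow> 'v \<Rightarrow> 'v list \<Rightarrow> bool" where
  "is_path R u v ps \<longleftrightarrow> ps \<noteq> [] \<and> hd ps = u \<and> last ps = v \<and> distinct ps \<and>
     (\<forall>i. Suc i < length ps \<longrightarrow> (ps ! i, ps ! Suc i) \<in> R)"

definition ancestor :: "'b set \<Rightarrow> ('b \<Rightarrow> 'b) \<Rightarrow> ('b \<Rightarrow> 'b) \<Rightarrow> 'b set set \<Rightarrow> 'b set \<Rightarrow> 'b set \<Rightarrow> 'b set \<Rightarrow> bool" where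
  "ancestor B \<sigma> \<alpha> S root x y \<longleftrightarrow>
     (\<exists>ps. is_path (adj B \<sigma> \<alpha> S) root y ps \<and> x \<in> set ps)"

definition tremaux :: "'b set \<Rightarrow> ('b \<Rightarrow> 'b) \<Rightarrow> ('b \<Rightarrow> 'b) \<Rightarrow> 'b \<Rightarrow> 'b set set \<Rightarrow> bool" where
  "tremaux B \<sigma> \<alpha> r S \<longleftrightarrow>
     (\<forall>b\<in>B. ancestor B \<sigma> \<alpha> S (vertex_of \<sigma> r) (vertex_of \<sigma> b) (vertex_of \<sigma> (\<alpha> b)) \<or>
            ancestor B \<sigma> \<alpha> S (vertex_of \<sigma> r) (vertex_of \<sigma> (\<alpha> b)) (vertex_of \<sigma> b))"

end

theory Submission
  imports Defs "HOL-Combinatorics.Cycles"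
begin

lemma subseq_Cons_drop:
  "subseq (x#xs) (drop k ys) \<longleftrightarrow> (\<exists>i. k \<le> i \<and> i < length ys \<and> ys!i = x \<and> subseq xs (drop (Suc i) ys))"
proof (induction ys arbitrary: k)
  case Nil
  then show ?case by simp
next
  case (Cons y ys)
  show ?case
  proof (cases k)
    case 0
    have IH0: "subseq (x#xs) ys \<longleftrightarrow> (\<exists>i. i < length ys \<and> ys!i = x \<and> subseq xs (drop (Suc i) ys))"
      using Cons.IH[of 0] by simp
    show ?thesis
    proof
      assume H: "subseq (x # xs) (drop k (y # ys))"
      show "\<exists>i\<ge>k. i < length (y # ys) \<and> (y # ys) ! i = x \<and> subseq xs (drop (Suc i) (y # ys))"
      proof (cases "x = y \<and> subseq xs ys")
        case True
        then show ?thesis using 0 by (intro exI[of _ 0]) simp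
      next
        case False
        then have "subseq (x#xs) ys" using H 0 by (cases "x = y") (auto intro: subseq_Cons')
        then obtain i where "i < length ys \<and> ys!i = x \<and> subseq xs (drop (Suc i) ys)" using IH0 by blast
        then show ?thesis using 0 by (intro exI[of _ "Suc i"]) simp
      qed
    next
      assume "\<exists>i\<ge>k. i < length (y # ys) \<and> (y # ys) ! i = x \<and> subseq xs (drop (Suc i) (y # ys))"
      then obtain i where i: "i < length (y # ys)" "(y # ys) ! i = x" "subseq xs (drop (Suc i) (y # ys))" by blast
      show "subseq (x # xs) (drop k (y # ys))"
      proof (cases i)
        case 0
        then show ?thesis using i \<open>k = 0\<close> by simp
      next
        case (Suc j)
        then have "subseq (x#xs) ys" using IH0 i by auto
        then show ?thesis using \<open>k = 0\<close> by (cases "x = y") (auto dest: subseq_Cons')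
      qed
    qed
  next
    case (Suc k')
    have "subseq (x # xs) (drop k (y # ys)) \<longleftrightarrow> (\<exists>i\<ge>k'. i < length ys \<and> ys!i = x \<and> subseq xs (drop (Suc i) ys))"
      using Cons.IH[of k'] Suc by simp
    also have "\<dots> \<longleftrightarrow> (\<exists>i\<ge>k. i < length (y # ys) \<and> (y # ys) ! i = x \<and> subseq xs (drop (Suc i) (y # ys)))"
    proof
      assume "\<exists>i\<ge>k'. i < length ys \<and> ys!i = x \<and> subseq xs (drop (Suc i) ys)"
      then obtain i where "i\<ge>k'" "i < length ys" "ys!i = x" "subseq xs (drop (Suc i) ys)" by blast
      then show "\<exists>i\<ge>k. i < length (y # ys) \<and> (y # ys) ! i = x \<and> subseq xs (drop (Suc i) (y # ys))"
        using Suc by (intro exI[of _ "Suc i"]) simp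
    next
      assume "\<exists>i\<ge>k. i < length (y # ys) \<and> (y # ys) ! i = x \<and> subseq xs (drop (Suc i) (y # ys))"
      then obtain i where "i\<ge>k" "i < length (y # ys)" "(y # ys) ! i = x" "subseq xs (drop (Suc i) (y # ys))" by blast
      then show "\<exists>i\<ge>k'. i < length ys \<and> ys!i = x \<and> subseq xs (drop (Suc i) ys)"
        using Suc by (cases i) auto
    qed
    finally show ?thesis .
  qed
qed

lemma subseq_Cons_dropI:
  "k \<le> i \<Longrightarrow> i < length ys \<Longrightarrow> ys!i = x \<Longrightarrow> subseq xs (drop (Suc i) ys) \<Longrightarrow> subseq (x#xs) (drop k ys)"
  unfolding subseq_Cons_drop[of x xs k ys] by blast

lemma subseq_Cons_dropE:
  assumes "subseq (x#xs) (drop k ys)"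
  obtains i where "k \<le> i" "i < length ys" "ys!i = x" "subseq xs (drop (Suc i) ys)"
  using assms unfolding subseq_Cons_drop[of x xs k ys] by blast

lemma subseq_drop0: "subseq xs ys = subseq xs (drop 0 ys)" by simp

lemma subseq4:
  "subseq [a,b,c,d] w \<longleftrightarrow> (\<exists>i1 i2 i3 i4. i1 < i2 \<and> i2 < i3 \<and> i3 < i4 \<and> i4 < length w \<and>
      w!i1 = a \<and> w!i2 = b \<and> w!i3 = c \<and> w!i4 = d)"
proof
  assume "subseq [a,b,c,d] w"
  then have "subseq [a,b,c,d] (drop 0 w)" by simp
  then obtain i1 where 1: "i1 < length w" "w!i1 = a" "subseq [b,c,d] (drop (Suc i1) w)"
    by (rule subseq_Cons_dropE)
  from 1(3) obtain i2 where 2: "Suc i1 \<le> i2" "w!i2 = b" "subseq [c,d] (drop (Suc i2) w)"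
    by (rule subseq_Cons_dropE)
  from 2(3) obtain i3 where 3: "Suc i2 \<le> i3" "w!i3 = c" "subseq [d] (drop (Suc i3) w)"
    by (rule subseq_Cons_dropE)
  from 3(3) obtain i4 where 4: "Suc i3 \<le> i4" "i4 < length w" "w!i4 = d"
    by (rule subseq_Cons_dropE)
  show "\<exists>i1 i2 i3 i4. i1 < i2 \<and> i2 < i3 \<and> i3 < i4 \<and> i4 < length w \<and>
      w!i1 = a \<and> w!i2 = b \<and> w!i3 = c \<and> w!i4 = d"
    apply (rule exI[of _ i1], rule exI[of _ i2], rule exI[of _ i3], rule exI[of _ i4])
    using 1 2 3 4 by simp
next
  assume "\<exists>i1 i2 i3 i4. i1 < i2 \<and> i2 < i3 \<and> i3 < i4 \<and> i4 < length w \<and>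
      w!i1 = a \<and> w!i2 = b \<and> w!i3 = c \<and> w!i4 = d"
  then obtain i1 i2 i3 i4 where h: "i1 < i2" "i2 < i3" "i3 < i4" "i4 < length w"
      "w!i1 = a" "w!i2 = b" "w!i3 = c" "w!i4 = d" by blast
  show "subseq [a,b,c,d] w"
    apply (subst subseq_drop0)
        apply (rule subseq_Cons_dropI[of _ i1], use h in simp_all)
    apply (rule subseq_Cons_dropI[of _ i2], use h in simp_all)
    apply (rule subseq_Cons_dropI[of _ i3], use h in simp_all)
    apply (rule subseq_Cons_dropI[of _ i4], use h in simp_all)
    done
qed

lemma subseq6:
  "subseq [a,b,c,d,e,f] w \<longleftrightarrow> (\<exists>i1 i2 i3 i4 i5 i6. i1 < i2 \<and> i2 < i3 \<and> i3 < i4 \<and> i4 < i5 \<and> i5 < i6 \<and> i6 < length w \<and>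
      w!i1 = a \<and> w!i2 = b \<and> w!i3 = c \<and> w!i4 = d \<and> w!i5 = e \<and> w!i6 = f)"
proof
  assume "subseq [a,b,c,d,e,f] w"
  then have "subseq [a,b,c,d,e,f] (drop 0 w)" by simp
  then obtain i1 where 1: "i1 < length w" "w!i1 = a" "subseq [b,c,d,e,f] (drop (Suc i1) w)"
    by (rule subseq_Cons_dropE)
  from 1(3) obtain i2 where 2: "Suc i1 \<le> i2" "w!i2 = b" "subseq [c,d,e,f] (drop (Suc i2) w)"
    by (rule subseq_Cons_dropE)
  from 2(3) obtain i3 where 3: "Suc i2 \<le> i3" "w!i3 = c" "subseq [d,e,f] (drop (Suc i3) w)"
    by (rule subseq_Cons_dropE)
  from 3(3) obtain i4 where 4: "Suc i3 \<le> i4" "w!i4 = d" "subseq [e,f] (drop (Suc i4) w)"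
    by (rule subseq_Cons_dropE)
  from 4(3) obtain i5 where 5: "Suc i4 \<le> i5" "w!i5 = e" "subseq [f] (drop (Suc i5) w)"
    by (rule subseq_Cons_dropE)
  from 5(3) obtain i6 where 6: "Suc i5 \<le> i6" "i6 < length w" "w!i6 = f"
    by (rule subseq_Cons_dropE)
  show "\<exists>i1 i2 i3 i4 i5 i6. i1 < i2 \<and> i2 < i3 \<and> i3 < i4 \<and> i4 < i5 \<and> i5 < i6 \<and> i6 < length w \<and>
      w!i1 = a \<and> w!i2 = b \<and> w!i3 = c \<and> w!i4 = d \<and> w!i5 = e \<and> w!i6 = f"
    apply (rule exI[of _ i1], rule exI[of _ i2], rule exI[of _ i3], rule exI[of _ i4], rule exI[of _ i5], rule exI[of _ i6])
    using 1 2 3 4 5 6 by simp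
next
  assume "\<exists>i1 i2 i3 i4 i5 i6. i1 < i2 \<and> i2 < i3 \<and> i3 < i4 \<and> i4 < i5 \<and> i5 < i6 \<and> i6 < length w \<and>
      w!i1 = a \<and> w!i2 = b \<and> w!i3 = c \<and> w!i4 = d \<and> w!i5 = e \<and> w!i6 = f"
  then obtain i1 i2 i3 i4 i5 i6 where h: "i1 < i2" "i2 < i3" "i3 < i4" "i4 < i5" "i5 < i6" "i6 < length w"
      "w!i1 = a" "w!i2 = b" "w!i3 = c" "w!i4 = d" "w!i5 = e" "w!i6 = f" by blast
  show "subseq [a,b,c,d,e,f] w"
    apply (subst subseq_drop0)
        apply (rule subseq_Cons_dropI[of _ i1], use h in simp_all)
    apply (rule subseq_Cons_dropI[of _ i2], use h in simp_all)
    apply (rule subseq_Cons_dropI[of _ i3], use h in simp_all)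
    apply (rule subseq_Cons_dropI[of _ i4], use h in simp_all)
    apply (rule subseq_Cons_dropI[of _ i5], use h in simp_all)
    apply (rule subseq_Cons_dropI[of _ i6], use h in simp_all)
    done
qed


locale TM =
  fixes B :: "'b set" and \<sigma> \<alpha> :: "'b \<Rightarrow> 'b" and r :: 'b and S :: "'b set set"
  assumes map: "is_map B \<sigma> \<alpha>" and rB: "r \<in> B" and st: "spanning_tree B \<sigma> \<alpha> S"
begin

abbreviation vt where "vt \<equiv> vertex_of \<sigma>"
abbreviation ed where "ed \<equiv> edge_of \<alpha>"
abbreviation AD where "AD F \<equiv> adj B \<sigma> \<alpha> F"
abbreviation RT where "RT \<equiv> vertex_of \<sigma> r"
abbreviation tau where "tau \<equiv> tour \<sigma> \<alpha> S"

lemma finB: "finite B" using map unfolding is_map_def by blast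
lemma sperm: "\<sigma> permutes B" using map unfolding is_map_def by blast
lemma aperm: "\<alpha> permutes B" using map unfolding is_map_def by blast
lemma a_in: "x \<in> B \<Longrightarrow> \<alpha> x \<in> B" by (simp add: permutes_in_image[OF aperm])
lemma s_in: "x \<in> B \<Longrightarrow> \<sigma> x \<in> B" by (simp add: permutes_in_image[OF sperm])
lemma aa: "x \<in> B \<Longrightarrow> \<alpha> (\<alpha> x) = x" using map unfolding is_map_def by blast
lemma a_neq: "x \<in> B \<Longrightarrow> \<alpha> x \<noteq> x" using map unfolding is_map_def by blast
lemma sn_in: "x \<in> B \<Longrightarrow> (\<sigma> ^^ n) x \<in> B" by (induction n) (auto simp: s_in)
lemma ed_a: "x \<in> B \<Longrightarrow> ed (\<alpha> x) = ed x" by (auto simp: edge_of_def aa)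
lemma ed_eq: "x \<in> B \<Longrightarrow> y \<in> B \<Longrightarrow> ed x = ed y \<longleftrightarrow> (y = x \<or> y = \<alpha> x)"
  unfolding edge_of_def using aa by (auto simp: doubleton_eq_iff)
lemma S_sub: "S \<subseteq> ed ` B" using st by (simp add: spanning_tree_def map_edges_def)
lemma ed_S_B: assumes "ed x \<in> S" shows "x \<in> B"
proof (rule ccontr)
  assume "x \<notin> B"
  then have ax: "\<alpha> x = x" using aperm permutes_not_in by fastforce
  obtain y where "y \<in> B" "ed x = ed y" using S_sub assms by blast
  then have "{x} = {y, \<alpha> y}" using ax by (simp add: edge_of_def)
  then show False using \<open>y \<in> B\<close> \<open>x \<notin> B\<close> by auto
qed
lemma adj_iff: "(p,q) \<in> AD F \<longleftrightarrow> (\<exists>b\<in>B. ed b \<in> F \<and> p = vt b \<and> q = vt (\<alpha> b))"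
  by (auto simp: adj_def)
lemma adj_sym: "(p,q) \<in> AD F \<Longrightarrow> (q,p) \<in> AD F"
  unfolding adj_iff by (metis a_in aa ed_a)
lemma adjI: "b \<in> B \<Longrightarrow> ed b \<in> F \<Longrightarrow> (vt b, vt (\<alpha> b)) \<in> AD F"
  unfolding adj_iff by blast
lemma rt_sym: "(p,q) \<in> (AD F)\<^sup>* \<Longrightarrow> (q,p) \<in> (AD F)\<^sup>*"
  by (induction rule: rtrancl_induct) (auto intro: converse_rtrancl_into_rtrancl adj_sym)
lemma adj_mono: "F \<subseteq> G \<Longrightarrow> (p,q) \<in> (AD F)\<^sup>* \<Longrightarrow> (p,q) \<in> (AD G)\<^sup>*"
proof -
  assume "F \<subseteq> G" "(p,q) \<in> (AD F)\<^sup>*"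
  moreover have "AD F \<subseteq> AD G" using \<open>F \<subseteq> G\<close> by (auto simp: adj_def)
  ultimately show ?thesis using rtrancl_mono by blast
qed
lemma adj_monoD: "(p,q) \<in> (AD (F - X))\<^sup>* \<Longrightarrow> (p,q) \<in> (AD F)\<^sup>*"
  using adj_mono[of "F - X" F] by blast
lemma adj_monoD2: "(p,q) \<in> (AD (F - X - Y))\<^sup>* \<Longrightarrow> (p,q) \<in> (AD (F - Y))\<^sup>*"
  using adj_mono[of "F - X - Y" "F - Y"] by blast

lemma bridge: "b \<in> B \<Longrightarrow> ed b \<in> S \<Longrightarrow> (vt b, vt (\<alpha> b)) \<notin> (AD (S - {ed b}))\<^sup>*"
  using st by (simp add: spanning_tree_def)
lemma conn: "x \<in> B \<Longrightarrow> y \<in> B \<Longrightarrow> (vt x, vt y) \<in> (AD S)\<^sup>*"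
  using st by (simp add: spanning_tree_def map_vertices_def)

lemma split:
  assumes "y \<in> B" "(p,q) \<in> (AD F)\<^sup>*"
  shows "(p,q) \<in> (AD (F - {ed y}))\<^sup>* \<or> (p, vt y) \<in> (AD (F - {ed y}))\<^sup>* \<or> (p, vt (\<alpha> y)) \<in> (AD (F - {ed y}))\<^sup>*"
  using assms(2)
proof (induction rule: rtrancl_induct)
  case base
  then show ?case by simp
next
  case (step q' q)
  obtain b where b: "b \<in> B" "ed b \<in> F" "q' = vt b" "q = vt (\<alpha> b)" using step(2) adj_iff by blast
  show ?case
  proof (cases "(p, q') \<in> (AD (F - {ed y}))\<^sup>*")
    case pq: True
    show ?thesis
    proof (cases "ed b = ed y")
      case True
      then have "b = y \<or> b = \<alpha> y" using ed_eq assms(1) b(1) by blast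
      then have "q' = vt y \<or> q' = vt (\<alpha> y)" using b(3) by blast
      then show ?thesis
      proof
        assume e: "q' = vt y" show ?thesis using pq unfolding e by blast
      next
        assume e: "q' = vt (\<alpha> y)" show ?thesis using pq unfolding e by blast
      qed
    next
      case False
      then have "ed b \<in> F - {ed y}" using b(2) by blast
      from adjI[OF b(1) this] have "(q', q) \<in> AD (F - {ed y})" unfolding b(3) b(4) .
      then show ?thesis using pq by (meson rtrancl.rtrancl_into_rtrancl)
    qed
  next
    case False
    then show ?thesis using step.IH by blast
  qed
qed

definition D where "D e = {u. (RT, u) \<notin> (AD (S - {e}))\<^sup>*}"

definition child where "child a \<longleftrightarrow> a \<in> B \<and> ed a \<in> S \<and> vt a \<in> D (ed a)"

lemma RT_notD: "RT \<notin> D e" by (simp add: D_def)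

lemma D_step: "(p,q) \<in> (AD (S - {e}))\<^sup>* \<Longrightarrow> p \<in> D e \<longleftrightarrow> q \<in> D e"
  unfolding D_def by (blast intro: rtrancl_trans dest: rt_sym)

lemma one_side: assumes "y \<in> B" "ed y \<in> S" shows "vt y \<notin> D (ed y) \<or> vt (\<alpha> y) \<notin> D (ed y)"
  using split[OF assms(1) conn[OF rB assms(1)]] unfolding D_def by blast

lemma other_side: assumes "y \<in> B" "ed y \<in> S" shows "vt y \<in> D (ed y) \<or> vt (\<alpha> y) \<in> D (ed y)"
  using bridge[OF assms] unfolding D_def by (blast intro: rtrancl_trans dest: rt_sym)

lemma child_or: assumes "y \<in> B" "ed y \<in> S" shows "child y \<or> child (\<alpha> y)"
  using other_side[OF assms] assms a_in ed_a aa unfolding child_def by auto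

lemma child_parent: "child a \<Longrightarrow> vt (\<alpha> a) \<notin> D (ed a)"
  using one_side unfolding child_def by blast

lemma child_B: "child a \<Longrightarrow> a \<in> B" by (simp add: child_def)

lemma vt_neq: "child a \<Longrightarrow> vt (\<alpha> a) \<noteq> vt a"
  using child_parent unfolding child_def by metis

lemma D_sub:
  assumes "y \<in> B" "ed y \<in> S" "ed y \<noteq> e" "vt y \<in> D e"
  shows "D (ed y) \<subseteq> D e"
proof
  fix w assume w: "w \<in> D (ed y)"
  show "w \<in> D e"
  proof (rule ccontr)
    assume "w \<notin> D e"
    then have "(RT, w) \<in> (AD (S - {e}))\<^sup>*" by (simp add: D_def)
    from split[OF assms(1) this]
    have "(RT, w) \<in> (AD (S - {e} - {ed y}))\<^sup>* \<or> (RT, vt y) \<in> (AD (S - {e} - {ed y}))\<^sup>* \<or>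
          (RT, vt (\<alpha> y)) \<in> (AD (S - {e} - {ed y}))\<^sup>*" .
    moreover have "\<not> (RT, w) \<in> (AD (S - {e} - {ed y}))\<^sup>*"
      using w adj_monoD2 unfolding D_def by blast
    moreover have "\<not> (RT, vt y) \<in> (AD (S - {e} - {ed y}))\<^sup>*"
      using assms(4) adj_monoD unfolding D_def by blast
    moreover have "\<not> (RT, vt (\<alpha> y)) \<in> (AD (S - {e} - {ed y}))\<^sup>*"
    proof
      assume "(RT, vt (\<alpha> y)) \<in> (AD (S - {e} - {ed y}))\<^sup>*"
      then have "(RT, vt (\<alpha> y)) \<in> (AD (S - {e}))\<^sup>*" using adj_monoD by blast
      moreover have "(vt (\<alpha> y), vt y) \<in> AD (S - {e})"
        using adjI[of "\<alpha> y" "S - {e}"] assms a_in aa ed_a by auto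
      ultimately have "(RT, vt y) \<in> (AD (S - {e}))\<^sup>*" by (meson rtrancl.rtrancl_into_rtrancl)
      then show False using assms(4) by (simp add: D_def)
    qed
    ultimately show False by blast
  qed
qed

lemma c_notin:
  assumes a: "child a" and y: "y \<in> B" "vt y = vt a" "ed y \<in> S" "ed y \<noteq> ed a"
  shows "vt a \<notin> D (ed y)"
proof -
  have aB: "a \<in> B" "ed a \<in> S" "vt a \<in> D (ed a)" using a by (auto simp: child_def)
  have "(RT, vt (\<alpha> a)) \<in> (AD (S - {ed a}))\<^sup>*" using child_parent[OF a] by (simp add: D_def)
  from split[OF y(1) this]
  have "(RT, vt (\<alpha> a)) \<in> (AD (S - {ed a} - {ed y}))\<^sup>* \<or> (RT, vt y) \<in> (AD (S - {ed a} - {ed y}))\<^sup>* \<or>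
          (RT, vt (\<alpha> y)) \<in> (AD (S - {ed a} - {ed y}))\<^sup>*" .
  moreover have "(RT, vt a) \<in> (AD (S - {ed y}))\<^sup>*" if "(RT, vt (\<alpha> a)) \<in> (AD (S - {ed a} - {ed y}))\<^sup>*"
  proof -
    have "(RT, vt (\<alpha> a)) \<in> (AD (S - {ed y}))\<^sup>*" using that adj_monoD2 by blast
    moreover have "(vt (\<alpha> a), vt a) \<in> AD (S - {ed y})"
      using adjI[of "\<alpha> a" "S - {ed y}"] aB y a_in aa ed_a by auto
    ultimately show ?thesis by (meson rtrancl.rtrancl_into_rtrancl)
  qed
  moreover have "\<not> (RT, vt y) \<in> (AD (S - {ed a} - {ed y}))\<^sup>*"
    using aB(3) adj_monoD[of RT "vt a" "S - {ed a}" "{ed y}"] unfolding D_def y(2) by blast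
  moreover have "\<not> (RT, vt (\<alpha> y)) \<in> (AD (S - {ed a} - {ed y}))\<^sup>*"
  proof
    assume "(RT, vt (\<alpha> y)) \<in> (AD (S - {ed a} - {ed y}))\<^sup>*"
    then have "(RT, vt (\<alpha> y)) \<in> (AD (S - {ed a}))\<^sup>*" using adj_monoD by blast
    moreover have "(vt (\<alpha> y), vt y) \<in> AD (S - {ed a})"
      using adjI[of "\<alpha> y" "S - {ed a}"] y a_in aa ed_a by auto
    ultimately have "(RT, vt y) \<in> (AD (S - {ed a}))\<^sup>*" by (meson rtrancl.rtrancl_into_rtrancl)
    then show False using aB(3) y(2) by (simp add: D_def)
  qed
  ultimately show ?thesis by (simp add: D_def)
qed

lemma decomp:
  assumes F: "F \<subseteq> S" and cw: "(c, w) \<in> (AD F)\<^sup>*"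
    and H: "\<forall>y\<in>B. vt y = c \<and> ed y \<in> F \<longrightarrow> c \<notin> D (ed y)"
  shows "w = c \<or> (\<exists>y\<in>B. vt y = c \<and> ed y \<in> F \<and> w \<in> D (ed y))"
  using cw
proof (induction rule: rtrancl_induct)
  case base
  then show ?case by simp
next
  case (step w' w)
  obtain z where z: "z \<in> B" "ed z \<in> F" "w' = vt z" "w = vt (\<alpha> z)" using step(2) adj_iff by blast
  show ?case
    using step.IH
  proof
    assume "w' = c"
    show ?thesis
    proof (cases "w = c")
      case False
      have "c \<notin> D (ed z)" using H z \<open>w' = c\<close> by blast
      then have "w \<in> D (ed z)" using other_side[of z] z F \<open>w' = c\<close> by auto
      then show ?thesis using z \<open>w' = c\<close> by blast
    qed simp
  next
    assume "\<exists>y\<in>B. vt y = c \<and> ed y \<in> F \<and> w' \<in> D (ed y)"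
    then obtain y where y: "y \<in> B" "vt y = c" "ed y \<in> F" "w' \<in> D (ed y)" by blast
    show ?thesis
    proof (cases "ed z = ed y")
      case True
      then have "z = y \<or> z = \<alpha> y" using ed_eq y(1) z(1) by blast
      moreover have "z \<noteq> y" using H y z by blast
      ultimately have "z = \<alpha> y" by blast
      then have "w = c" using z(4) y(2) aa[OF y(1)] by simp
      then show ?thesis by simp
    next
      case False
      then have "ed z \<in> S - {ed y}" using z(2) F by blast
      from adjI[OF z(1) this] have "(w', w) \<in> AD (S - {ed y})" unfolding z(3) z(4) .
      then have "w \<in> D (ed y)" using D_step y(4) by blast
      then show ?thesis using y by blast
    qed
  qed
qed

definition Fl where "Fl e = {x\<in>B. vt x \<in> D e}"

lemma lam:
  assumes a1: "child a1" and a2: "child a2"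
  shows "Fl (ed a1) \<inter> Fl (ed a2) = {} \<or> Fl (ed a1) \<subseteq> Fl (ed a2) \<or> Fl (ed a2) \<subseteq> Fl (ed a1)"
proof (cases "ed a1 = ed a2")
  case False
  have b1: "a1 \<in> B" "ed a1 \<in> S" "vt a1 \<in> D (ed a1)" using a1 by (auto simp: child_def)
  have b2: "a2 \<in> B" "ed a2 \<in> S" "vt a2 \<in> D (ed a2)" using a2 by (auto simp: child_def)
  show ?thesis
  proof (cases "vt (\<alpha> a2) \<in> D (ed a1)")
    case True
    then have "D (ed a2) \<subseteq> D (ed a1)" using D_sub[of "\<alpha> a2" "ed a1"] b2 False a_in ed_a by auto
    then show ?thesis unfolding Fl_def by blast
  next
    case n2: False
    show ?thesis
    proof (cases "vt (\<alpha> a1) \<in> D (ed a2)")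
      case True
      then have "D (ed a1) \<subseteq> D (ed a2)" using D_sub[of "\<alpha> a1" "ed a2"] b1 False a_in ed_a by auto
      then show ?thesis unfolding Fl_def by blast
    next
      case n1: False
      have s1: "(vt (\<alpha> a1), vt a1) \<in> AD (S - {ed a2})"
        using adjI[of "\<alpha> a1" "S - {ed a2}"] b1 False a_in aa ed_a by auto
      have s2: "(vt (\<alpha> a2), vt a2) \<in> AD (S - {ed a1})"
        using adjI[of "\<alpha> a2" "S - {ed a1}"] b2 False a_in aa ed_a by auto
      have v1: "vt a1 \<notin> D (ed a2)" using n1 s1 D_step by blast
      have v2: "vt a2 \<notin> D (ed a1)" using n2 s2 D_step by blast
      have "x \<notin> Fl (ed a1) \<inter> Fl (ed a2)" for x
      proof
        assume x: "x \<in> Fl (ed a1) \<inter> Fl (ed a2)"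
        then have xB: "x \<in> B" and w1: "vt x \<in> D (ed a1)" and w2: "vt x \<in> D (ed a2)" by (auto simp: Fl_def)
        have "(vt x, RT) \<in> (AD S)\<^sup>*" using conn[OF xB rB] .
        from split[OF b1(1) this]
        have "(vt x, vt a1) \<in> (AD (S - {ed a1}))\<^sup>*"
        proof (elim disjE)
          assume "(vt x, RT) \<in> (AD (S - {ed a1}))\<^sup>*"
          then show ?thesis using w1 D_step RT_notD by blast
        next
          assume "(vt x, vt (\<alpha> a1)) \<in> (AD (S - {ed a1}))\<^sup>*"
          then show ?thesis using w1 D_step child_parent[OF a1] by blast
        qed
        from split[OF b2(1) this]
        show False
        proof (elim disjE)
          assume "(vt x, vt a1) \<in> (AD (S - {ed a1} - {ed a2}))\<^sup>*"
          then have "(vt x, vt a1) \<in> (AD (S - {ed a2}))\<^sup>*" using adj_monoD2 by blast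
          then show False using w2 v1 D_step by blast
        next
          assume "(vt x, vt a2) \<in> (AD (S - {ed a1} - {ed a2}))\<^sup>*"
          then have "(vt x, vt a2) \<in> (AD (S - {ed a1}))\<^sup>*" using adj_monoD by blast
          then show False using w1 v2 D_step by blast
        next
          assume "(vt x, vt (\<alpha> a2)) \<in> (AD (S - {ed a1} - {ed a2}))\<^sup>*"
          then have "(vt x, vt (\<alpha> a2)) \<in> (AD (S - {ed a1}))\<^sup>*" using adj_monoD by blast
          then show False using w1 n2 D_step by blast
        qed
      qed
      then show ?thesis by blast
    qed
  qed
qed simp

end


lemma funpow_shift: "(f ^^ (a + b)) x = (f ^^ b) ((f ^^ a) x)"
  by (metis add.commute funpow_add o_apply)

lemma range_split3:
  fixes m n :: nat
  shows "{f j | j. j \<le> m + n + 2} = {f j | j. j \<le> m} \<union> {f (m + 1 + j) | j. j \<le> n} \<union> {f (m + n + 2)}"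
proof -
  have "{f j | j. j \<le> m + n + 2} \<subseteq> {f j | j. j \<le> m} \<union> {f (m + 1 + j) | j. j \<le> n} \<union> {f (m + n + 2)}"
  proof
    fix x assume "x \<in> {f j | j. j \<le> m + n + 2}"
    then obtain j where j: "j \<le> m + n + 2" "x = f j" by blast
    show "x \<in> {f j | j. j \<le> m} \<union> {f (m + 1 + j) | j. j \<le> n} \<union> {f (m + n + 2)}"
    proof (cases "j \<le> m")
      case True then show ?thesis using j by blast
    next
      case False
      show ?thesis
      proof (cases "j = m + n + 2")
        case True then show ?thesis using j by blast
      next
        case F2: False
        have e: "j = m + 1 + (j - m - 1)" and le: "j - m - 1 \<le> n" using False F2 j(1) by auto
        have "x = f (m + 1 + (j - m - 1))" using j(2) e by metis
        then have "x \<in> {f (m + 1 + j) | j. j \<le> n}" using le by blast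
        then show ?thesis by blast
      qed
    qed
  qed
  moreover have "{f j | j. j \<le> m} \<union> {f (m + 1 + j) | j. j \<le> n} \<union> {f (m + n + 2)} \<subseteq> {f j | j. j \<le> m + n + 2}"
  proof -
    have "{f j | j. j \<le> m} \<subseteq> {f j | j. j \<le> m + n + 2}" by force
    moreover have "{f (m + 1 + j) | j. j \<le> n} \<subseteq> {f j | j. j \<le> m + n + 2}"
    proof
      fix x assume "x \<in> {f (m + 1 + j) | j. j \<le> n}"
      then obtain j where "j \<le> n" "x = f (m + 1 + j)" by blast
      then show "x \<in> {f j | j. j \<le> m + n + 2}" by (intro CollectI exI[of _ "m + 1 + j"]) simp
    qed
    moreover have "f (m + n + 2) \<in> {f j | j. j \<le> m + n + 2}" by blast
    ultimately show ?thesis by blast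
  qed
  ultimately show ?thesis by (rule antisym)
qed

lemma single_range: "{g l | l. a \<le> l \<and> l \<le> (a::nat)} = {g a}"
  by force

lemma range_split1: "{f j | j. j \<le> Suc m} = {f j | j. j \<le> m} \<union> {f (Suc m)}"
  by (auto simp: le_Suc_eq)

lemma range_splitG: "i0 \<le> i \<Longrightarrow> {g l | l. i0 \<le> l \<and> l \<le> Suc i} = {g l | l. i0 \<le> l \<and> l \<le> i} \<union> {g (Suc i)}"
  by (auto simp: le_Suc_eq)

lemma union_splitG: "\<Union>{F l | l. i0 \<le> l \<and> l < Suc i \<and> P l} =
   \<Union>{F l | l. i0 \<le> l \<and> l < i \<and> P l} \<union> (if i0 \<le> i \<and> P i then F i else {})"
  by (auto simp: less_Suc_eq)

context TM
begin

lemma perm_s: "permutation \<sigma>" using sperm finB permutation_permutes by blast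

abbreviation kp where "kp x \<equiv> least_power \<sigma> x"

lemma kp_pos: "kp x > 0" using least_power_of_permutation(2)[OF perm_s] .
lemma kp_id: "(\<sigma> ^^ kp x) x = x" using least_power_of_permutation(1)[OF perm_s] .
lemma kp_mul: "(\<sigma> ^^ (kp x * n)) x = x"
  using least_power_dvd[OF perm_s] by (metis dvd_triv_left)

lemma vt_fun: "vt ((\<sigma> ^^ n) x) = vt x"
proof
  show "vt ((\<sigma> ^^ n) x) \<subseteq> vt x"
  proof
    fix y assume "y \<in> vt ((\<sigma> ^^ n) x)"
    then obtain m where "y = (\<sigma> ^^ m) ((\<sigma> ^^ n) x)" by (auto simp: vertex_of_def)
    then have "y = (\<sigma> ^^ (m + n)) x" by (simp add: funpow_add)
    then show "y \<in> vt x" by (auto simp: vertex_of_def)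
  qed
next
  show "vt x \<subseteq> vt ((\<sigma> ^^ n) x)"
  proof
    fix y assume "y \<in> vt x"
    then obtain m where m: "y = (\<sigma> ^^ m) x" by (auto simp: vertex_of_def)
    have le: "n \<le> kp x * n" using kp_pos[of x] by simp
    have "(\<sigma> ^^ (kp x * n - n + m)) ((\<sigma> ^^ n) x) = (\<sigma> ^^ (kp x * n - n + m + n)) x"
      by (metis funpow_add o_apply)
    also have "kp x * n - n + m + n = m + kp x * n" using le by arith
    also have "(\<sigma> ^^ (m + kp x * n)) x = (\<sigma> ^^ m) ((\<sigma> ^^ (kp x * n)) x)" by (metis funpow_add o_apply)
    also have "\<dots> = y" using kp_mul m by simp
    finally show "y \<in> vt ((\<sigma> ^^ n) x)" by (auto simp: vertex_of_def)
  qed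
qed

lemma vt_s: "vt (\<sigma> x) = vt x" using vt_fun[of 1 x] by simp

lemma in_vt: "x \<in> vt x" unfolding vertex_of_def by (auto intro: exI[of _ 0])

lemma at_vertex: assumes "vt y = vt x" shows "\<exists>l<kp x. y = (\<sigma> ^^ l) x"
proof -
  have "y \<in> vt x" using in_vt assms by metis
  then obtain n where n: "y = (\<sigma> ^^ n) x" by (auto simp: vertex_of_def)
  have "(\<sigma> ^^ (n mod kp x)) x = (\<sigma> ^^ n) x" using funpow_mod_eq[OF kp_id] .
  moreover have "n mod kp x < kp x" using kp_pos by simp
  ultimately show ?thesis using n by metis
qed

lemma at_vertex1: assumes "vt y = vt x" shows "\<exists>l. 1 \<le> l \<and> l \<le> kp x \<and> y = (\<sigma> ^^ l) x"
proof -
  obtain l where l: "l < kp x" "y = (\<sigma> ^^ l) x" using at_vertex[OF assms] by blast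
  show ?thesis
  proof (cases "l = 0")
    case True
    then show ?thesis using l kp_id[of x] kp_pos[of x] by (intro exI[of _ "kp x"]) auto
  next
    case False
    then show ?thesis using l by (intro exI[of _ l]) auto
  qed
qed

lemma neq_pow: "0 < l \<Longrightarrow> l < kp x \<Longrightarrow> (\<sigma> ^^ l) x \<noteq> x"
  using least_power_le[where f=\<sigma> and n=l and x=x] by fastforce

lemma tau_eq: "tau x = (if ed x \<in> S then \<sigma> (\<alpha> x) else \<sigma> x)" by (simp add: tour_def)

lemma tau_in: "x \<in> B \<Longrightarrow> tau x \<in> B" using tau_eq s_in a_in by simp

lemma taun_in: "x \<in> B \<Longrightarrow> (tau ^^ n) x \<in> B" by (induction n) (auto simp: tau_in)

definition bet where "bet x = (if ed x \<in> S then \<alpha> x else x)"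

lemma bet_bet: "bet (bet x) = x"
proof (cases "ed x \<in> S")
  case True
  then have "x \<in> B" using ed_S_B by blast
  then show ?thesis using True by (simp add: bet_def ed_a aa)
qed (simp add: bet_def)

lemma bet_perm: "bet permutes B"
  unfolding permutes_def
proof (intro conjI allI impI)
  fix x assume "x \<notin> B" then show "bet x = x" using ed_S_B by (auto simp: bet_def)
next
  fix y show "\<exists>!x. bet x = y" using bet_bet by metis
qed

lemma tau_comp: "tau = \<sigma> \<circ> bet" by (auto simp: tour_def bet_def)

lemma tau_perm: "tau permutes B" unfolding tau_comp using permutes_compose[OF bet_perm sperm] .

definition Wc where "Wc a \<longleftrightarrow> (\<exists>n. (tau ^^ n) (\<sigma> a) = a \<and> {(tau ^^ j) (\<sigma> a) | j. j \<le> n} = Fl (ed a))"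

lemma walk_gen:
  assumes z: "z \<in> B"
    and H: "\<forall>l. i0 \<le> l \<and> l < K \<and> ed ((\<sigma> ^^ l) z) \<in> S \<longrightarrow> Wc (\<alpha> ((\<sigma> ^^ l) z))"
  shows "i0 \<le> i \<Longrightarrow> i \<le> K \<Longrightarrow> \<exists>m. (tau ^^ m) ((\<sigma> ^^ i0) z) = (\<sigma> ^^ i) z \<and> i - i0 \<le> m \<and>
     {(tau ^^ j) ((\<sigma> ^^ i0) z) | j. j \<le> m} = {(\<sigma> ^^ l) z | l. i0 \<le> l \<and> l \<le> i} \<union>
        \<Union>{Fl (ed ((\<sigma> ^^ l) z)) | l. i0 \<le> l \<and> l < i \<and> ed ((\<sigma> ^^ l) z) \<in> S}"
proof (induction i)
  case 0
  then show ?case by (intro exI[of _ 0]) auto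
next
  case (Suc i)
  let ?st = "(\<sigma> ^^ i0) z"
  let ?G = "\<lambda>i. {(\<sigma> ^^ l) z | l. i0 \<le> l \<and> l \<le> i} \<union>
        \<Union>{Fl (ed ((\<sigma> ^^ l) z)) | l. i0 \<le> l \<and> l < i \<and> ed ((\<sigma> ^^ l) z) \<in> S}"
  show ?case
  proof (cases "i0 = Suc i")
    case True
    have e: "{(\<sigma> ^^ l) z | l. Suc i \<le> l \<and> l \<le> Suc i} = {(\<sigma> ^^ Suc i) z}"
      using single_range[of "\<lambda>l. (\<sigma> ^^ l) z" "Suc i"] by simp
    have e2: "{Fl (ed ((\<sigma> ^^ l) z)) | l. Suc i \<le> l \<and> l < Suc i \<and> ed ((\<sigma> ^^ l) z) \<in> S} = {}" by auto
    show ?thesis unfolding True e e2 by (intro exI[of _ 0]) simp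
  next
    case False
    then have i0i: "i0 \<le> i" using Suc.prems by simp
    obtain m where m: "(tau ^^ m) ?st = (\<sigma> ^^ i) z" "i - i0 \<le> m"
      "{(tau ^^ j) ?st | j. j \<le> m} = ?G i"
      using Suc.IH i0i Suc.prems by auto
    define y where "y = (\<sigma> ^^ i) z"
    have yB: "y \<in> B" using sn_in z y_def by simp
    have Gs: "?G (Suc i) = ?G i \<union> {(\<sigma> ^^ Suc i) z} \<union> (if ed y \<in> S then Fl (ed y) else {})"
      using range_splitG[OF i0i, of "\<lambda>l. (\<sigma> ^^ l) z"]
        union_splitG[of "\<lambda>l. Fl (ed ((\<sigma> ^^ l) z))" i0 i "\<lambda>l. ed ((\<sigma> ^^ l) z) \<in> S"] i0i
      by (auto simp: y_def)
    show ?thesis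
    proof (cases "ed y \<in> S")
      case False
      have t: "(tau ^^ Suc m) ?st = (\<sigma> ^^ Suc i) z"
        using m(1) False by (simp add: tau_eq y_def)
      have "{(tau ^^ j) ?st | j. j \<le> Suc m} = ?G (Suc i)"
        unfolding range_split1 Gs using m(3) t False by simp
      then show ?thesis using t m(2) by (intro exI[of _ "Suc m"]) auto
    next
      case True
      have "Wc (\<alpha> y)" using H i0i Suc.prems True y_def by auto
      then obtain n where n: "(tau ^^ n) (\<sigma> (\<alpha> y)) = \<alpha> y" "{(tau ^^ j) (\<sigma> (\<alpha> y)) | j. j \<le> n} = Fl (ed (\<alpha> y))"
        unfolding Wc_def by blast
      have t1: "(tau ^^ (m + 1)) ?st = \<sigma> (\<alpha> y)" using m(1) True by (simp add: tau_eq y_def)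
      have t2: "(tau ^^ (m + 1 + j)) ?st = (tau ^^ j) (\<sigma> (\<alpha> y))" for j
        using t1 funpow_shift[where f=tau and a="m + 1" and b=j and x="?st"] by simp
      have "(tau ^^ (m + n + 2)) ?st = (tau ^^ ((m + 1 + n) + 1)) ?st"
        by (simp add: algebra_simps)
      also have "\<dots> = tau ((tau ^^ (m + 1 + n)) ?st)"
        using funpow_shift[where f=tau and a="m + 1 + n" and b=1 and x="?st"] by simp
      also have "\<dots> = tau (\<alpha> y)" using t2 n(1) by simp
      also have "\<dots> = \<sigma> y" using True yB by (simp add: tau_eq ed_a aa)
      finally have t3: "(tau ^^ (m + n + 2)) ?st = (\<sigma> ^^ Suc i) z" by (simp add: y_def)
      have "{(tau ^^ j) ?st | j. j \<le> m + n + 2} = ?G i \<union> Fl (ed y) \<union> {(\<sigma> ^^ Suc i) z}"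
        unfolding range_split3 m(3) t2 n(2) t3 using ed_a[OF yB] by simp
      also have "\<dots> = ?G (Suc i)" unfolding Gs using True by auto
      finally show ?thesis using t3 m(2) by (intro exI[of _ "m + n + 2"]) auto
    qed
  qed
qed

end

context TM
begin

lemma child_sub:
  assumes a: "child a" and y: "y \<in> B" "vt y = vt a" "y \<noteq> a" "ed y \<in> S"
  shows "ed y \<noteq> ed a" "child (\<alpha> y)" "Fl (ed y) \<subseteq> Fl (ed a)" "a \<notin> Fl (ed y)"
proof -
  have aB: "a \<in> B" "ed a \<in> S" "vt a \<in> D (ed a)" using a by (auto simp: child_def)
  show ne: "ed y \<noteq> ed a"
  proof
    assume "ed y = ed a"
    then have "y = a \<or> y = \<alpha> a" using ed_eq[OF aB(1) y(1)] by simp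
    then have "y = \<alpha> a" using y(3) by simp
    then show False using vt_neq[OF a] y(2) by simp
  qed
  have cn: "vt a \<notin> D (ed y)" using c_notin[OF a y(1) y(2) y(4) ne] .
  have "vt (\<alpha> y) \<in> D (ed y)" using other_side[OF y(1) y(4)] cn y(2) by simp
  then show "child (\<alpha> y)" unfolding child_def using y(1) y(4) a_in ed_a by simp
  have "D (ed y) \<subseteq> D (ed a)" using D_sub[OF y(1) y(4) ne] aB(3) y(2) by simp
  then show "Fl (ed y) \<subseteq> Fl (ed a)" unfolding Fl_def by blast
  show "a \<notin> Fl (ed y)" using cn by (simp add: Fl_def)
qed

lemma reach_child:
  assumes a: "child a" and x: "x \<in> B" "vt x \<in> D (ed a)"
  shows "(vt a, vt x) \<in> (AD (S - {ed a}))\<^sup>*"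
proof -
  have aB: "a \<in> B" using a by (simp add: child_def)
  from split[OF aB conn[OF x(1) rB]] show ?thesis
  proof (elim disjE)
    assume "(vt x, RT) \<in> (AD (S - {ed a}))\<^sup>*"
    then show ?thesis using D_step x(2) RT_notD by blast
  next
    assume "(vt x, vt a) \<in> (AD (S - {ed a}))\<^sup>*"
    then show ?thesis using rt_sym by blast
  next
    assume "(vt x, vt (\<alpha> a)) \<in> (AD (S - {ed a}))\<^sup>*"
    then show ?thesis using D_step x(2) child_parent[OF a] by blast
  qed
qed

lemma finFl: "finite (Fl e)" using finB by (simp add: Fl_def)

lemma child_walk: "child a \<Longrightarrow> Wc a"
proof (induction "card (Fl (ed a))" arbitrary: a rule: less_induct)
  case less
  have a: "child a" by fact
  have aB: "a \<in> B" "ed a \<in> S" "vt a \<in> D (ed a)" using a by (auto simp: child_def)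
  let ?k = "kp a"
  have H: "\<forall>l. 1 \<le> l \<and> l < ?k \<and> ed ((\<sigma> ^^ l) a) \<in> S \<longrightarrow> Wc (\<alpha> ((\<sigma> ^^ l) a))"
  proof (intro allI impI)
    fix l assume l: "1 \<le> l \<and> l < ?k \<and> ed ((\<sigma> ^^ l) a) \<in> S"
    define y where "y = (\<sigma> ^^ l) a"
    have y: "y \<in> B" "vt y = vt a" "y \<noteq> a" "ed y \<in> S"
      using sn_in[OF aB(1)] vt_fun neq_pow l by (auto simp: y_def)
    note cs = child_sub[OF a y]
    have "Fl (ed y) \<subset> Fl (ed a)" using cs(3) cs(4) aB by (auto simp: Fl_def)
    then have "card (Fl (ed (\<alpha> y))) < card (Fl (ed a))"
      using psubset_card_mono[OF finFl] ed_a[OF y(1)] by simp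
    then show "Wc (\<alpha> ((\<sigma> ^^ l) a))" using less.hyps cs(2) y_def by blast
  qed
  obtain m where m: "(tau ^^ m) ((\<sigma> ^^ 1) a) = (\<sigma> ^^ ?k) a"
     "{(tau ^^ j) ((\<sigma> ^^ 1) a) | j. j \<le> m} = {(\<sigma> ^^ l) a | l. 1 \<le> l \<and> l \<le> ?k} \<union>
        \<Union>{Fl (ed ((\<sigma> ^^ l) a)) | l. 1 \<le> l \<and> l < ?k \<and> ed ((\<sigma> ^^ l) a) \<in> S}"
    using walk_gen[OF aB(1) H, of ?k] kp_pos[of a] by auto
  have G: "{(\<sigma> ^^ l) a | l. 1 \<le> l \<and> l \<le> ?k} \<union>
        \<Union>{Fl (ed ((\<sigma> ^^ l) a)) | l. 1 \<le> l \<and> l < ?k \<and> ed ((\<sigma> ^^ l) a) \<in> S} = Fl (ed a)"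
  proof
    show "{(\<sigma> ^^ l) a | l. 1 \<le> l \<and> l \<le> ?k} \<union>
        \<Union>{Fl (ed ((\<sigma> ^^ l) a)) | l. 1 \<le> l \<and> l < ?k \<and> ed ((\<sigma> ^^ l) a) \<in> S} \<subseteq> Fl (ed a)"
    proof (intro Un_least)
      show "{(\<sigma> ^^ l) a | l. 1 \<le> l \<and> l \<le> ?k} \<subseteq> Fl (ed a)"
        using sn_in[OF aB(1)] vt_fun aB(3) by (auto simp: Fl_def)
      show "\<Union>{Fl (ed ((\<sigma> ^^ l) a)) | l. 1 \<le> l \<and> l < ?k \<and> ed ((\<sigma> ^^ l) a) \<in> S} \<subseteq> Fl (ed a)"
      proof (intro Union_least)
        fix X assume "X \<in> {Fl (ed ((\<sigma> ^^ l) a)) | l. 1 \<le> l \<and> l < ?k \<and> ed ((\<sigma> ^^ l) a) \<in> S}"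
        then obtain l where l: "1 \<le> l" "l < ?k" "ed ((\<sigma> ^^ l) a) \<in> S" "X = Fl (ed ((\<sigma> ^^ l) a))" by blast
        have "(\<sigma> ^^ l) a \<in> B" "vt ((\<sigma> ^^ l) a) = vt a" "(\<sigma> ^^ l) a \<noteq> a"
          using sn_in[OF aB(1)] vt_fun neq_pow l by auto
        from child_sub(3)[OF a this l(3)] show "X \<subseteq> Fl (ed a)" using l(4) by simp
      qed
    qed
  next
    show "Fl (ed a) \<subseteq> {(\<sigma> ^^ l) a | l. 1 \<le> l \<and> l \<le> ?k} \<union>
        \<Union>{Fl (ed ((\<sigma> ^^ l) a)) | l. 1 \<le> l \<and> l < ?k \<and> ed ((\<sigma> ^^ l) a) \<in> S}"
    proof
      fix x assume "x \<in> Fl (ed a)"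
      then have x: "x \<in> B" "vt x \<in> D (ed a)" by (auto simp: Fl_def)
      have HH: "\<forall>y\<in>B. vt y = vt a \<and> ed y \<in> S - {ed a} \<longrightarrow> vt a \<notin> D (ed y)"
        using c_notin[OF a] by blast
      from decomp[OF Diff_subset reach_child[OF a x] HH]
      show "x \<in> {(\<sigma> ^^ l) a | l. 1 \<le> l \<and> l \<le> ?k} \<union>
        \<Union>{Fl (ed ((\<sigma> ^^ l) a)) | l. 1 \<le> l \<and> l < ?k \<and> ed ((\<sigma> ^^ l) a) \<in> S}"
      proof (elim disjE)
        assume "vt x = vt a"
        then obtain l where "1 \<le> l \<and> l \<le> ?k \<and> x = (\<sigma> ^^ l) a" using at_vertex1 by blast
        then show ?thesis by blast
      next
        assume "\<exists>y\<in>B. vt y = vt a \<and> ed y \<in> S - {ed a} \<and> vt x \<in> D (ed y)"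
        then obtain y where y: "y \<in> B" "vt y = vt a" "ed y \<in> S - {ed a}" "vt x \<in> D (ed y)" by blast
        obtain l where l: "1 \<le> l" "l \<le> ?k" "y = (\<sigma> ^^ l) a" using at_vertex1[OF y(2)] by blast
        have "l \<noteq> ?k" using l(3) kp_id[of a] y(3) by auto
        then have "l < ?k" using l(2) by simp
        moreover have "x \<in> Fl (ed ((\<sigma> ^^ l) a))" using x y l(3) by (simp add: Fl_def)
        ultimately show ?thesis using l(1) y(3) l(3) by blast
      qed
    qed
  qed
  show ?case unfolding Wc_def using m kp_id[of a] G by (intro exI[of _ m]) simp
qed

lemma root_walk: "\<exists>m>0. (tau ^^ m) r = r \<and> {(tau ^^ j) r | j. j \<le> m} = B"
proof -
  let ?k = "kp r"
  have H: "\<forall>l. 0 \<le> l \<and> l < ?k \<and> ed ((\<sigma> ^^ l) r) \<in> S \<longrightarrow> Wc (\<alpha> ((\<sigma> ^^ l) r))"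
  proof (intro allI impI)
    fix l assume l: "0 \<le> l \<and> l < ?k \<and> ed ((\<sigma> ^^ l) r) \<in> S"
    define y where "y = (\<sigma> ^^ l) r"
    have y: "y \<in> B" "vt y = RT" "ed y \<in> S" using sn_in[OF rB] vt_fun l by (auto simp: y_def)
    have "vt (\<alpha> y) \<in> D (ed y)" using other_side[OF y(1) y(3)] y(2) RT_notD by metis
    then have "child (\<alpha> y)" unfolding child_def using y a_in ed_a by simp
    then show "Wc (\<alpha> ((\<sigma> ^^ l) r))" using child_walk y_def by blast
  qed
  obtain m where m: "(tau ^^ m) ((\<sigma> ^^ 0) r) = (\<sigma> ^^ ?k) r" "?k - 0 \<le> m"
     "{(tau ^^ j) ((\<sigma> ^^ 0) r) | j. j \<le> m} = {(\<sigma> ^^ l) r | l. 0 \<le> l \<and> l \<le> ?k} \<union>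
        \<Union>{Fl (ed ((\<sigma> ^^ l) r)) | l. 0 \<le> l \<and> l < ?k \<and> ed ((\<sigma> ^^ l) r) \<in> S}"
    using walk_gen[OF rB H, of ?k] by auto
  have G: "{(\<sigma> ^^ l) r | l. 0 \<le> l \<and> l \<le> ?k} \<union>
        \<Union>{Fl (ed ((\<sigma> ^^ l) r)) | l. 0 \<le> l \<and> l < ?k \<and> ed ((\<sigma> ^^ l) r) \<in> S} = B"
  proof
    show "{(\<sigma> ^^ l) r | l. 0 \<le> l \<and> l \<le> ?k} \<union>
        \<Union>{Fl (ed ((\<sigma> ^^ l) r)) | l. 0 \<le> l \<and> l < ?k \<and> ed ((\<sigma> ^^ l) r) \<in> S} \<subseteq> B"
      using sn_in[OF rB] by (auto simp: Fl_def)
  next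
    show "B \<subseteq> {(\<sigma> ^^ l) r | l. 0 \<le> l \<and> l \<le> ?k} \<union>
        \<Union>{Fl (ed ((\<sigma> ^^ l) r)) | l. 0 \<le> l \<and> l < ?k \<and> ed ((\<sigma> ^^ l) r) \<in> S}"
    proof
      fix x assume x: "x \<in> B"
      have HH: "\<forall>y\<in>B. vt y = RT \<and> ed y \<in> S \<longrightarrow> RT \<notin> D (ed y)" using RT_notD by blast
      from decomp[OF order_refl conn[OF rB x] HH]
      show "x \<in> {(\<sigma> ^^ l) r | l. 0 \<le> l \<and> l \<le> ?k} \<union>
        \<Union>{Fl (ed ((\<sigma> ^^ l) r)) | l. 0 \<le> l \<and> l < ?k \<and> ed ((\<sigma> ^^ l) r) \<in> S}"
      proof (elim disjE)
        assume "vt x = RT"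
        then obtain l where "l < ?k \<and> x = (\<sigma> ^^ l) r" using at_vertex by blast
        then show ?thesis by fastforce
      next
        assume "\<exists>y\<in>B. vt y = RT \<and> ed y \<in> S \<and> vt x \<in> D (ed y)"
        then obtain y where y: "y \<in> B" "vt y = RT" "ed y \<in> S" "vt x \<in> D (ed y)" by blast
        obtain l where l: "l < ?k" "y = (\<sigma> ^^ l) r" using at_vertex[OF y(2)] by blast
        have "x \<in> Fl (ed ((\<sigma> ^^ l) r))" using x y l(2) by (simp add: Fl_def)
        then show ?thesis using l y(3) by blast
      qed
    qed
  qed
  show ?thesis using m kp_id[of r] kp_pos[of r] G by (intro exI[of _ m]) auto
qed

end

context TM
begin

abbreviation N where "N \<equiv> card B"

lemma tau_inj: "inj tau" using permutes_inj[OF tau_perm] .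
lemma taun_inj: "inj (tau ^^ n)" using inj_fn[OF tau_inj] .

lemma cyc: "(tau ^^ N) r = r" "{(tau ^^ j) r | j. j < N} = B"
  "\<And>i j. i < N \<Longrightarrow> j < N \<Longrightarrow> (tau ^^ i) r = (tau ^^ j) r \<Longrightarrow> i = j"
proof -
  have pt: "permutation tau" using tau_perm finB permutation_permutes by blast
  let ?p = "least_power tau r"
  have p: "(tau ^^ ?p) r = r" "?p > 0" using least_power_of_permutation[OF pt] by auto
  have orb: "(tau ^^ j) r \<in> {(tau ^^ i) r | i. i < ?p}" for j
  proof -
    have "(tau ^^ (j mod ?p)) r = (tau ^^ j) r" using funpow_mod_eq[OF p(1)] .
    moreover have "j mod ?p < ?p" using p(2) by simp
    ultimately have "(tau ^^ j) r = (tau ^^ (j mod ?p)) r \<and> j mod ?p < ?p" by simp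
    then show ?thesis by blast
  qed
  obtain m where m: "m > 0" "(tau ^^ m) r = r" "{(tau ^^ j) r | j. j \<le> m} = B" using root_walk by blast
  have Bsub: "B \<subseteq> {(tau ^^ i) r | i. i < ?p}" using m(3) orb by blast
  have subB: "{(tau ^^ i) r | i. i < ?p} \<subseteq> B" using taun_in rB by blast
  have eqB: "{(tau ^^ i) r | i. i < ?p} = B" using Bsub subB by blast
  have dist: "False" if h: "(tau ^^ i) r = (tau ^^ j) r" "i < j" "j < ?p" for i j
  proof -
    have "(tau ^^ i) ((tau ^^ (j - i)) r) = (tau ^^ (i + (j - i))) r" by (simp add: funpow_add)
    also have "\<dots> = (tau ^^ i) r" using h by simp
    finally have "(tau ^^ (j - i)) r = r" using taun_inj[of i] by (simp add: inj_eq)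
    then have "?p \<le> j - i" using least_power_le[where f=tau and n="j-i" and x=r] h by simp
    then show False using h by simp
  qed
  have injp: "inj_on (\<lambda>i. (tau ^^ i) r) {..<?p}"
    unfolding inj_on_def using dist by (metis lessThan_iff linorder_neqE_nat)
  have img: "(\<lambda>i. (tau ^^ i) r) ` {..<?p} = B" using eqB by auto
  have cp: "N = ?p" using card_image[OF injp] img by simp
  show "(tau ^^ N) r = r" using cp p by simp
  show "{(tau ^^ j) r | j. j < N} = B" using cp eqB by simp
  show "\<And>i j. i < N \<Longrightarrow> j < N \<Longrightarrow> (tau ^^ i) r = (tau ^^ j) r \<Longrightarrow> i = j"
  proof -
    fix i j assume h: "i < N" "j < N" "(tau ^^ i) r = (tau ^^ j) r"
    show "i = j"
    proof (rule ccontr)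
      assume "i \<noteq> j"
      then consider "i < j" | "j < i" by arith
      then show False
      proof cases
        case 1 then show False using dist[OF h(3) 1] h(2) cp by simp
      next
        case 2 then show False using dist[OF h(3)[symmetric] 2] h(1) cp by simp
      qed
    qed
  qed
qed

definition tm where "tm x = (THE j. j < N \<and> (tau ^^ j) r = x)"

lemma tm: assumes "x \<in> B" shows "tm x < N" "(tau ^^ tm x) r = x"
proof -
  have "x \<in> {(tau ^^ j) r | j. j < N}" using cyc(2) assms by simp
  then obtain j where j: "j < N" "(tau ^^ j) r = x" by blast
  have "tm x = j" unfolding tm_def
  proof (rule the_equality)
    show "j < N \<and> (tau ^^ j) r = x" using j by simp
    fix i assume "i < N \<and> (tau ^^ i) r = x"
    then show "i = j" using cyc(3)[of i j] j by simp
  qed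
  then show "tm x < N" "(tau ^^ tm x) r = x" using j by auto
qed

lemma tm_uniq: assumes "j < N" shows "tm ((tau ^^ j) r) = j"
proof -
  have "tm ((tau ^^ j) r) < N" "(tau ^^ tm ((tau ^^ j) r)) r = (tau ^^ j) r"
    using tm[OF taun_in[OF rB]] by auto
  then show ?thesis using cyc(3) assms by blast
qed

lemma interval:
  assumes a: "child a"
  shows "tm (\<alpha> a) < tm a" "\<And>x. x \<in> B \<Longrightarrow> x \<in> Fl (ed a) \<longleftrightarrow> tm (\<alpha> a) < tm x \<and> tm x \<le> tm a"
proof -
  have aB: "a \<in> B" "ed a \<in> S" "vt a \<in> D (ed a)" using a by (auto simp: child_def)
  define b where "b = \<alpha> a"
  have bB: "b \<in> B" using a_in aB b_def by simp
  define p where "p = tm b"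
  have p: "p < N" "(tau ^^ p) r = b" using tm[OF bB] p_def by auto
  obtain n where n: "(tau ^^ n) (\<sigma> a) = a" "{(tau ^^ j) (\<sigma> a) | j. j \<le> n} = Fl (ed a)"
    using child_walk[OF a] unfolding Wc_def by blast
  have tb: "tau b = \<sigma> a" using aB b_def by (simp add: tau_eq ed_a aa)
  have sh: "(tau ^^ (p + 1 + j)) r = (tau ^^ j) (\<sigma> a)" for j
  proof -
    have "(tau ^^ (p + 1 + j)) r = (tau ^^ j) ((tau ^^ (p + 1)) r)"
      using funpow_shift[where f=tau and a="p+1" and b=j and x=r] .
    also have "(tau ^^ (p + 1)) r = tau ((tau ^^ p) r)" by simp
    finally show ?thesis using p(2) tb by simp
  qed
  have lt: "p + 1 + n < N"
  proof (rule ccontr)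
    assume "\<not> p + 1 + n < N"
    define j0 where "j0 = N - p - 1"
    have j0: "j0 \<le> n" "p + 1 + j0 = N" using p(1) \<open>\<not> p + 1 + n < N\<close> j0_def by auto
    have "r = (tau ^^ j0) (\<sigma> a)" using sh[of j0] cyc(1) unfolding j0(2) by simp
    then have "r \<in> Fl (ed a)" using n(2) j0(1) by blast
    then show False using RT_notD by (simp add: Fl_def)
  qed
  have ta: "tm a = p + 1 + n" using tm_uniq[OF lt] sh[of n] n(1) by simp
  show "tm (\<alpha> a) < tm a" using ta p_def b_def by simp
  fix x assume xB: "x \<in> B"
  show "x \<in> Fl (ed a) \<longleftrightarrow> tm (\<alpha> a) < tm x \<and> tm x \<le> tm a"
  proof
    assume "x \<in> Fl (ed a)"
    then obtain j where j: "j \<le> n" "x = (tau ^^ j) (\<sigma> a)" using n(2) by blast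
    then have "tm x = p + 1 + j" using sh[of j] tm_uniq[of "p + 1 + j"] lt by simp
    then show "tm (\<alpha> a) < tm x \<and> tm x \<le> tm a" using ta j(1) p_def b_def by simp
  next
    assume h: "tm (\<alpha> a) < tm x \<and> tm x \<le> tm a"
    define j where "j = tm x - p - 1"
    have j: "j \<le> n" "tm x = p + 1 + j" using h ta p_def b_def j_def by auto
    have "x = (tau ^^ (p + 1 + j)) r" using tm(2)[OF xB] j(2) by simp
    then have "x = (tau ^^ j) (\<sigma> a)" using sh by simp
    then show "x \<in> Fl (ed a)" using n(2) j(1) by blast
  qed
qed

abbreviation w where "w \<equiv> dow B \<sigma> \<alpha> r S"

lemma w_len: "length w = N" by (simp add: dow_def)
lemma w_nth: "i < N \<Longrightarrow> w ! i = ed ((tau ^^ i) r)" by (simp add: dow_def)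

lemma w_pos: assumes xB: "x \<in> B" and i: "i < N"
  shows "w ! i = ed x \<longleftrightarrow> i = tm x \<or> i = tm (\<alpha> x)"
proof -
  have yB: "(tau ^^ i) r \<in> B" using taun_in[OF rB] .
  have "w ! i = ed x \<longleftrightarrow> (tau ^^ i) r = x \<or> (tau ^^ i) r = \<alpha> x"
    using w_nth[OF i] ed_eq[OF xB yB] by auto
  also have "\<dots> \<longleftrightarrow> i = tm x \<or> i = tm (\<alpha> x)"
    using tm_uniq[OF i] tm(2)[OF xB] tm(2)[OF a_in[OF xB]] by auto
  finally show ?thesis .
qed

lemma w_nth_tm: "x \<in> B \<Longrightarrow> w ! tm x = ed x"
  using w_nth[OF tm(1)] tm(2) by simp

lemma tm_neq: "x \<in> B \<Longrightarrow> tm x \<noteq> tm (\<alpha> x)"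
  using tm(2)[of x] tm(2)[of "\<alpha> x"] a_in a_neq by metis

end

lemma crossing_gen:
  assumes "\<not> P (f i0)" "P (f i1)" "i0 \<le> i1"
  shows "\<exists>j. i0 \<le> j \<and> j < i1 \<and> \<not> P (f j) \<and> P (f (Suc j))"
  using assms
proof (induction i1)
  case 0
  then show ?case by simp
next
  case (Suc i)
  show ?case
  proof (cases "P (f i)")
    case True
    then have "i0 \<le> i" using Suc.prems by (metis le_SucE)
    then obtain j where "i0 \<le> j \<and> j < i \<and> \<not> P (f j) \<and> P (f (Suc j))" using Suc.IH Suc.prems True by blast
    then show ?thesis by (intro exI[of _ j]) simp
  next
    case False
    then have "i0 \<le> i" using Suc.prems by (metis le_SucE)
    then show ?thesis using False Suc.prems by (intro exI[of _ i]) simp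
  qed
qed

lemma path_chain:
  assumes "\<forall>i. Suc i < length ps \<longrightarrow> (ps ! i, ps ! Suc i) \<in> R" "i \<le> j" "j < length ps"
  shows "(ps ! i, ps ! j) \<in> R\<^sup>*"
  using assms(2,3)
proof (induction j)
  case 0
  then show ?case by simp
next
  case (Suc j)
  show ?case
  proof (cases "i = Suc j")
    case False
    then have "i \<le> j" using Suc.prems by simp
    then have "(ps ! i, ps ! j) \<in> R\<^sup>*" using Suc by simp
    moreover have "(ps ! j, ps ! Suc j) \<in> R" using assms(1) Suc.prems by simp
    ultimately show ?thesis by (rule rtrancl_into_rtrancl)
  qed simp
qed

lemma path_chain2:
  assumes "\<forall>i. Suc i \<le> j \<longrightarrow> (f i, f (Suc i)) \<in> R" "i \<le> j"
  shows "(f i, f j) \<in> R\<^sup>*"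
  using assms
proof (induction j)
  case 0
  then show ?case by simp
next
  case (Suc j)
  show ?case
  proof (cases "i = Suc j")
    case False
    then have "i \<le> j" using Suc.prems by simp
    then have "(f i, f j) \<in> R\<^sup>*" using Suc by simp
    moreover have "(f j, f (Suc j)) \<in> R" using Suc.prems by simp
    ultimately show ?thesis by (rule rtrancl_into_rtrancl)
  qed simp
qed

lemma path_exists:
  assumes "(s, t) \<in> R\<^sup>*"
  shows "\<exists>ps. is_path R s t ps"
  using assms
proof (induction rule: rtrancl_induct)
  case base
  then show ?case by (intro exI[of _ "[s]"]) (simp add: is_path_def)
next
  case (step t' t)
  then obtain ps where ps: "is_path R s t' ps" by blast
  then have ps': "ps \<noteq> []" "hd ps = s" "last ps = t'" "distinct ps"
    "\<forall>i. Suc i < length ps \<longrightarrow> (ps ! i, ps ! Suc i) \<in> R" by (auto simp: is_path_def)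
  show ?case
  proof (cases "t \<in> set ps")
    case True
    then obtain k where k: "k < length ps" "ps ! k = t" by (metis in_set_conv_nth)
    let ?qs = "take (Suc k) ps"
    have "is_path R s t ?qs"
      unfolding is_path_def
    proof (intro conjI allI impI)
      show "?qs \<noteq> []" using ps'(1) by simp
      show "hd ?qs = s" using ps'(1,2) by simp
      show "last ?qs = t" using k ps'(1) by (cases "length ps = Suc k") (auto simp: last_conv_nth min_def)
      show "distinct ?qs" using ps'(4) by simp
      fix i assume "Suc i < length ?qs"
      then show "(?qs ! i, ?qs ! Suc i) \<in> R" using ps'(5) k by simp
    qed
    then show ?thesis by blast
  next
    case False
    let ?qs = "ps @ [t]"
    have "is_path R s t ?qs"
      unfolding is_path_def
    proof (intro conjI allI impI)
      show "?qs \<noteq> []" by simp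
      show "hd ?qs = s" using ps'(1,2) by simp
      show "last ?qs = t" by simp
      show "distinct ?qs" using ps'(4) False by simp
      fix i assume i: "Suc i < length ?qs"
      show "(?qs ! i, ?qs ! Suc i) \<in> R"
      proof (cases "Suc i < length ps")
        case True
        then show ?thesis using ps'(5) by (simp add: nth_append)
      next
        case False
        then have li: "i = length ps - 1" using i by simp
        then have "?qs ! i = last ps" "?qs ! Suc i = t" using ps'(1)
          by (auto simp: nth_append last_conv_nth)
        then show ?thesis using ps'(3) step(2) by simp
      qed
    qed
    then show ?thesis by blast
  qed
qed

context TM
begin

abbreviation anc where "anc u v \<equiv> ancestor B \<sigma> \<alpha> S RT u v"

lemma cross_step:
  assumes a: "child a" and pq: "(p, q) \<in> AD S" "p \<notin> D (ed a)" "q \<in> D (ed a)"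
  shows "p = vt (\<alpha> a) \<and> q = vt a"
proof -
  have aB: "a \<in> B" "ed a \<in> S" "vt a \<in> D (ed a)" using a by (auto simp: child_def)
  obtain z where z: "z \<in> B" "ed z \<in> S" "p = vt z" "q = vt (\<alpha> z)" using pq(1) adj_iff by blast
  have "ed z = ed a"
  proof (rule ccontr)
    assume "ed z \<noteq> ed a"
    then have "ed z \<in> S - {ed a}" using z(2) by blast
    from adjI[OF z(1) this] have "(p, q) \<in> AD (S - {ed a})" unfolding z(3) z(4) .
    then show False using D_step pq(2,3) by blast
  qed
  then have "z = a \<or> z = \<alpha> a" using ed_eq[OF aB(1) z(1)] by simp
  moreover have "z \<noteq> a" using pq(2) aB(3) z(3) by blast
  ultimately have "z = \<alpha> a" by blast
  then show ?thesis using z(3,4) aa[OF aB(1)] by simp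
qed

lemma cross_step2:
  assumes a: "child a" and pq: "(p, q) \<in> AD S" "p \<in> D (ed a)" "q \<notin> D (ed a)"
  shows "p = vt a \<and> q = vt (\<alpha> a)"
  using cross_step[OF a adj_sym[OF pq(1)] pq(3) pq(2)] by simp

lemma anc_D:
  assumes "anc u v" "child a" "u \<in> D (ed a)"
  shows "v \<in> D (ed a)"
proof (rule ccontr)
  assume vD: "v \<notin> D (ed a)"
  obtain ps where ps: "is_path (AD S) RT v ps" "u \<in> set ps" using assms(1) by (auto simp: ancestor_def)
  have p: "ps \<noteq> []" "hd ps = RT" "last ps = v" "distinct ps"
    "\<forall>i. Suc i < length ps \<longrightarrow> (ps ! i, ps ! Suc i) \<in> AD S" using ps(1) by (auto simp: is_path_def)
  obtain i where i: "i < length ps" "ps ! i = u" using ps(2) by (metis in_set_conv_nth)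
  have h0: "ps ! 0 = RT" using p(1,2) by (simp add: hd_conv_nth)
  have hl: "ps ! (length ps - 1) = v" using p(1,3) by (simp add: last_conv_nth)
  obtain j1 where j1: "j1 < i" "ps ! j1 \<notin> D (ed a)" "ps ! Suc j1 \<in> D (ed a)"
    using crossing_gen[of "\<lambda>u. u \<in> D (ed a)" "\<lambda>k. ps ! k" 0 i]
      h0 RT_notD i(2) assms(3) by auto
  obtain j2 where j2: "i \<le> j2" "j2 < length ps - 1" "ps ! j2 \<in> D (ed a)" "ps ! Suc j2 \<notin> D (ed a)"
    using crossing_gen[of "\<lambda>u. u \<notin> D (ed a)" "\<lambda>k. ps ! k" i "length ps - 1"]
      hl vD i assms(3) by (metis One_nat_def Suc_pred less_Suc_eq_le less_nat_zero_code not_gr_zero)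
  have c1: "ps ! j1 = vt (\<alpha> a) \<and> ps ! Suc j1 = vt a"
    using cross_step[OF assms(2) _ j1(2) j1(3)] p(5) j1(1) i(1) by auto
  have c2: "ps ! j2 = vt a \<and> ps ! Suc j2 = vt (\<alpha> a)"
    using cross_step2[OF assms(2) _ j2(3) j2(4)] p(5) j2(2) by auto
  have l1: "Suc j1 < length ps" "j1 < length ps" using j1(1) i(1) by auto
  have l2: "j2 < length ps" "Suc j2 < length ps" using j2(2) by auto
  have "Suc j1 = j2" using nth_eq_iff_index_eq[OF p(4) l1(1) l2(1)] c1 c2 by simp
  moreover have "j1 = Suc j2" using nth_eq_iff_index_eq[OF p(4) l1(2) l2(2)] c1 c2 by simp
  ultimately show False by simp
qed

lemma D_anc:
  assumes xB: "x \<in> B" and yB: "y \<in> B"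
    and H: "\<forall>a. child a \<longrightarrow> vt x \<in> D (ed a) \<longrightarrow> vt y \<in> D (ed a)"
  shows "anc (vt x) (vt y)"
proof (rule ccontr)
  assume nanc: "\<not> anc (vt x) (vt y)"
  obtain ps where ps: "is_path (AD S) RT (vt y) ps" using path_exists[OF conn[OF rB yB]] by blast
  have uns: "vt x \<notin> set ps" using nanc ps by (auto simp: ancestor_def)
  have p: "ps \<noteq> []" "hd ps = RT" "last ps = vt y" "distinct ps"
    "\<forall>i. Suc i < length ps \<longrightarrow> (ps ! i, ps ! Suc i) \<in> AD S" using ps by (auto simp: is_path_def)
  have uR: "vt x \<noteq> RT" using uns p(1,2) by (metis hd_in_set)
  obtain qs where qs: "is_path (AD S) RT (vt x) qs" using path_exists[OF conn[OF rB xB]] by blast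
  have q: "qs \<noteq> []" "hd qs = RT" "last qs = vt x" "distinct qs"
    "\<forall>i. Suc i < length qs \<longrightarrow> (qs ! i, qs ! Suc i) \<in> AD S" using qs by (auto simp: is_path_def)
  have n2: "length qs \<ge> 2"
  proof (rule ccontr)
    assume "\<not> length qs \<ge> 2"
    moreover have "length qs \<noteq> 0" using q(1) by simp
    ultimately have "length qs = 1" by linarith
    then have "hd qs = last qs" by (cases qs) auto
    then show False using q(2,3) uR by simp
  qed
  define k where "k = length qs - 2"
  have kk: "Suc k = length qs - 1" "Suc k < length qs" using n2 k_def by auto
  have qu: "qs ! Suc k = vt x" using q(1,3) kk(1) by (simp add: last_conv_nth)
  have q0: "qs ! 0 = RT" using q(1,2) by (simp add: hd_conv_nth)
  have "(qs ! k, qs ! Suc k) \<in> AD S" using q(5) kk(2) by simp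
  then obtain z where z: "z \<in> B" "ed z \<in> S" "qs ! k = vt z" "vt x = vt (\<alpha> z)"
    using adj_iff qu by auto
  have steps: "\<forall>i. Suc i \<le> k \<longrightarrow> (qs ! i, qs ! Suc i) \<in> AD (S - {ed z})"
  proof (intro allI impI)
    fix i assume i: "Suc i \<le> k"
    have "(qs ! i, qs ! Suc i) \<in> AD S" using q(5) i kk(2) by simp
    then obtain z' where z': "z' \<in> B" "ed z' \<in> S" "qs ! i = vt z'" "qs ! Suc i = vt (\<alpha> z')"
      using adj_iff by blast
    have ne1: "qs ! i \<noteq> vt x" using nth_eq_iff_index_eq[OF q(4), of i "Suc k"] qu i kk(2) by simp
    have ne2: "qs ! Suc i \<noteq> vt x" using nth_eq_iff_index_eq[OF q(4), of "Suc i" "Suc k"] qu i kk(2) by simp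
    have "ed z' \<noteq> ed z"
    proof
      assume "ed z' = ed z"
      then have "z' = z \<or> z' = \<alpha> z" using ed_eq[OF z(1) z'(1)] by simp
      then show False
      proof
        assume "z' = z" then show False using ne2 z'(4) z(4) by simp
      next
        assume "z' = \<alpha> z" then show False using ne1 z'(3) z(4) by simp
      qed
    qed
    then have "ed z' \<in> S - {ed z}" using z'(2) by blast
    from adjI[OF z'(1) this] show "(qs ! i, qs ! Suc i) \<in> AD (S - {ed z})" unfolding z'(3) z'(4) .
  qed
  have rz: "(RT, vt z) \<in> (AD (S - {ed z}))\<^sup>*"
    using path_chain2[of k "\<lambda>i. qs ! i" "AD (S - {ed z})" 0, OF steps] q0 z(3) by simp
  have uD: "vt x \<in> D (ed z)"
  proof (rule ccontr)
    assume "vt x \<notin> D (ed z)"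
    then have "(RT, vt (\<alpha> z)) \<in> (AD (S - {ed z}))\<^sup>*" using z(4) by (simp add: D_def)
    then have "(vt z, vt (\<alpha> z)) \<in> (AD (S - {ed z}))\<^sup>*" using rz rt_sym rtrancl_trans by metis
    then show False using bridge[OF z(1) z(2)] by simp
  qed
  have cz: "child (\<alpha> z)" unfolding child_def using z a_in ed_a uD by simp
  have vD: "vt y \<in> D (ed z)" using H cz uD ed_a[OF z(1)] by auto
  have h0: "ps ! 0 = RT" using p(1,2) by (simp add: hd_conv_nth)
  have hl: "ps ! (length ps - 1) = vt y" using p(1,3) by (simp add: last_conv_nth)
  obtain j where j: "j < length ps - 1" "ps ! j \<notin> D (ed z)" "ps ! Suc j \<in> D (ed z)"
    using crossing_gen[of "\<lambda>u. u \<in> D (ed z)" "\<lambda>k. ps ! k" 0 "length ps - 1"]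
      h0 hl RT_notD vD by auto
  have st: "(ps ! j, ps ! Suc j) \<in> AD S" using p(5) j(1) by simp
  have e: "ed (\<alpha> z) = ed z" using ed_a[OF z(1)] .
  have "ps ! j = vt (\<alpha> (\<alpha> z)) \<and> ps ! Suc j = vt (\<alpha> z)"
    using cross_step[OF cz st] j(2,3) e by simp
  then have "ps ! Suc j = vt (\<alpha> z)" by simp
  then have "vt x \<in> set ps" using z(4) j(1) by (metis Suc_lessI diff_Suc_1 less_diff_conv nth_mem Suc_pred p(1) length_greater_0_conv less_SucI)
  then show False using uns by simp
qed

end

context TM
begin

lemma S_child: assumes "e \<in> S" shows "\<exists>a. child a \<and> ed a = e"
proof -
  obtain y where y: "y \<in> B" "e = ed y" using assms S_sub by blast
  then have "child y \<or> child (\<alpha> y)" using child_or assms by simp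
  then show ?thesis using y ed_a by metis
qed

lemma ord_child: assumes "child a" "i \<in> {tm a, tm (\<alpha> a)}" "j \<in> {tm a, tm (\<alpha> a)}" "i < j"
  shows "i = tm (\<alpha> a) \<and> j = tm a"
  using interval(1)[OF assms(1)] assms(2-4) by auto

lemma arc1: assumes a: "child a" and arc: "Lambda_arc w (ed a) f"
  shows "\<exists>x\<in>B. f = ed x \<and> tm (\<alpha> a) < tm x \<and> tm x < tm a \<and> tm a < tm (\<alpha> x)"
proof -
  have aB: "a \<in> B" using a by (simp add: child_def)
  obtain i1 i2 i3 i4 where i: "i1 < i2" "i2 < i3" "i3 < i4" "i4 < length w"
    "w ! i1 = ed a" "w ! i2 = f" "w ! i3 = ed a" "w ! i4 = f"
    using arc unfolding Lambda_arc_def subseq4 by blast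
  have N: "i1 < N" "i2 < N" "i3 < N" "i4 < N" using i w_len by auto
  have "i1 \<in> {tm a, tm (\<alpha> a)}" "i3 \<in> {tm a, tm (\<alpha> a)}"
    using w_pos[OF aB N(1)] w_pos[OF aB N(3)] i by auto
  then have o: "i1 = tm (\<alpha> a)" "i3 = tm a" using ord_child[OF a] i by (meson less_trans)+
  define x where "x = (tau ^^ i2) r"
  have xB: "x \<in> B" using taun_in[OF rB] x_def by simp
  have tx: "tm x = i2" using tm_uniq[OF N(2)] x_def by simp
  have f: "f = ed x" using w_nth[OF N(2)] i(6) x_def by simp
  have "i4 = tm x \<or> i4 = tm (\<alpha> x)" using w_pos[OF xB N(4)] i(8) f by simp
  then have "i4 = tm (\<alpha> x)" using tx i by auto
  then show ?thesis using xB f tx o i by auto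
qed

lemma arc2: assumes a: "child a" and arc: "Lambda_arc w f (ed a)"
  shows "\<exists>x\<in>B. f = ed x \<and> tm x < tm (\<alpha> a) \<and> tm (\<alpha> a) < tm (\<alpha> x) \<and> tm (\<alpha> x) < tm a"
proof -
  have aB: "a \<in> B" using a by (simp add: child_def)
  obtain i1 i2 i3 i4 where i: "i1 < i2" "i2 < i3" "i3 < i4" "i4 < length w"
    "w ! i1 = f" "w ! i2 = ed a" "w ! i3 = f" "w ! i4 = ed a"
    using arc unfolding Lambda_arc_def subseq4 by blast
  have N: "i1 < N" "i2 < N" "i3 < N" "i4 < N" using i w_len by auto
  have "i2 \<in> {tm a, tm (\<alpha> a)}" "i4 \<in> {tm a, tm (\<alpha> a)}"
    using w_pos[OF aB N(2)] w_pos[OF aB N(4)] i by auto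
  then have o: "i2 = tm (\<alpha> a)" "i4 = tm a" using ord_child[OF a] i by (meson less_trans)+
  define x where "x = (tau ^^ i1) r"
  have xB: "x \<in> B" using taun_in[OF rB] x_def by simp
  have tx: "tm x = i1" using tm_uniq[OF N(1)] x_def by simp
  have f: "f = ed x" using w_nth[OF N(1)] i(5) x_def by simp
  have "i3 = tm x \<or> i3 = tm (\<alpha> x)" using w_pos[OF xB N(3)] i(7) f by simp
  then have "i3 = tm (\<alpha> x)" using tx i by auto
  then show ?thesis using xB f tx o i by auto
qed

lemma Fl_iff: "x \<in> B \<Longrightarrow> x \<in> Fl e \<longleftrightarrow> vt x \<in> D e" by (simp add: Fl_def)

lemma partA:
  assumes T: "tremaux B \<sigma> \<alpha> r S"
  shows "\<not> (\<exists>f e1 e2. e1 \<in> S \<and> e2 \<in> S \<and> Lambda_arc w e1 f \<and> Lambda_arc w f e2)"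
proof
  assume "\<exists>f e1 e2. e1 \<in> S \<and> e2 \<in> S \<and> Lambda_arc w e1 f \<and> Lambda_arc w f e2"
  then obtain f e1 e2 where h: "e1 \<in> S" "e2 \<in> S" "Lambda_arc w e1 f" "Lambda_arc w f e2" by blast
  obtain a1 where a1: "child a1" "ed a1 = e1" using S_child[OF h(1)] by blast
  obtain a2 where a2: "child a2" "ed a2 = e2" using S_child[OF h(2)] by blast
  obtain x where x: "x \<in> B" "f = ed x" "tm (\<alpha> a1) < tm x" "tm x < tm a1" "tm a1 < tm (\<alpha> x)"
    using arc1[OF a1(1)] h(3) a1(2) by blast
  obtain x' where x': "x' \<in> B" "f = ed x'" "tm x' < tm (\<alpha> a2)" "tm (\<alpha> a2) < tm (\<alpha> x')" "tm (\<alpha> x') < tm a2"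
    using arc2[OF a2(1)] h(4) a2(2) by blast
  have "x' = x \<or> x' = \<alpha> x" using ed_eq[OF x(1) x'(1)] x(2) x'(2) by simp
  moreover have "x' \<noteq> \<alpha> x"
  proof
    assume "x' = \<alpha> x"
    then have "tm (\<alpha> x) < tm x" using x'(3) x'(4) aa[OF x(1)] by simp
    then show False using x by simp
  qed
  ultimately have xx: "x' = x" by blast
  have axB: "\<alpha> x \<in> B" using a_in[OF x(1)] .
  have m1: "vt x \<in> D (ed a1)" using interval(2)[OF a1(1) x(1)] x Fl_iff[OF x(1)] by simp
  have m2: "vt (\<alpha> x) \<notin> D (ed a1)" using interval(2)[OF a1(1) axB] x Fl_iff[OF axB] by simp
  have m3: "vt (\<alpha> x) \<in> D (ed a2)" using interval(2)[OF a2(1) axB] x' xx Fl_iff[OF axB] by simp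
  have m4: "vt x \<notin> D (ed a2)" using interval(2)[OF a2(1) x(1)] x' xx Fl_iff[OF x(1)] by simp
  have "anc (vt x) (vt (\<alpha> x)) \<or> anc (vt (\<alpha> x)) (vt x)" using T x(1) by (simp add: tremaux_def)
  then show False
  proof
    assume "anc (vt x) (vt (\<alpha> x))"
    then show False using anc_D[OF _ a1(1) m1] m2 by blast
  next
    assume "anc (vt (\<alpha> x)) (vt x)"
    then show False using anc_D[OF _ a2(1) m3] m4 by blast
  qed
qed

lemma B_aux:
  assumes xB: "x \<in> B" and lt: "tm x < tm (\<alpha> x)" and a1: "child a1" and a2: "child a2"
    and m1: "x \<in> Fl (ed a1)" and m2: "\<alpha> x \<notin> Fl (ed a1)" and m3: "\<alpha> x \<in> Fl (ed a2)" and m4: "x \<notin> Fl (ed a2)"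
  shows "subseq [ed a1, ed x, ed a1, ed a2, ed x, ed a2] w"
proof -
  have axB: "\<alpha> x \<in> B" using a_in[OF xB] .
  have a1B: "a1 \<in> B" "\<alpha> a1 \<in> B" using a1 a_in by (auto simp: child_def)
  have a2B: "a2 \<in> B" "\<alpha> a2 \<in> B" using a2 a_in by (auto simp: child_def)
  have disj: "Fl (ed a1) \<inter> Fl (ed a2) = {}" using lam[OF a1 a2] m1 m2 m3 m4 by blast
  define X where "X = tm x"
  define Y where "Y = tm (\<alpha> x)"
  define P1 where "P1 = tm (\<alpha> a1)"
  define Q1 where "Q1 = tm a1"
  define P2 where "P2 = tm (\<alpha> a2)"
  define Q2 where "Q2 = tm a2"
  have I1: "\<And>z. z \<in> B \<Longrightarrow> z \<in> Fl (ed a1) \<longleftrightarrow> P1 < tm z \<and> tm z \<le> Q1" using interval(2)[OF a1] P1_def Q1_def by simp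
  have I2: "\<And>z. z \<in> B \<Longrightarrow> z \<in> Fl (ed a2) \<longleftrightarrow> P2 < tm z \<and> tm z \<le> Q2" using interval(2)[OF a2] P2_def Q2_def by simp
  have a1F: "a1 \<in> Fl (ed a1)" using a1 by (simp add: child_def Fl_def)
  have h1: "P1 < X" "X \<le> Q1" using I1[OF xB] m1 X_def by auto
  have h2: "\<not> (P1 < Y \<and> Y \<le> Q1)" using I1[OF axB] m2 Y_def by auto
  have h3: "P2 < Y" "Y \<le> Q2" using I2[OF axB] m3 Y_def by auto
  have h4: "\<not> (P2 < X \<and> X \<le> Q2)" using I2[OF xB] m4 X_def by auto
  have XY: "X < Y" using lt X_def Y_def by simp
  have XQ1: "X \<noteq> Q1"
  proof
    assume "X = Q1"
    then have "x = a1" using tm(2)[OF xB] tm(2)[OF a1B(1)] X_def Q1_def by metis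
    then have "Y = P1" using Y_def P1_def by simp
    then show False using h1 XY by simp
  qed
  have YQ1: "Q1 < Y" using h1 h2 XY by auto
  have "a1 \<notin> Fl (ed a2)" using a1F disj by blast
  then have "\<not> (P2 < Q1 \<and> Q1 \<le> Q2)" using I2[OF a1B(1)] Q1_def by simp
  then have Q1P2: "Q1 \<le> P2" using YQ1 h3 by auto
  have Q1P2s: "Q1 \<noteq> P2"
  proof
    assume "Q1 = P2"
    then have "a1 = \<alpha> a2" using tm(2)[OF a1B(1)] tm(2)[OF a2B(2)] Q1_def P2_def by metis
    then have "ed a1 = ed a2" using ed_a[OF a2B(1)] by simp
    then show False using m1 m4 by simp
  qed
  have YQ2: "Y \<noteq> Q2"
  proof
    assume "Y = Q2"
    then have "\<alpha> x = a2" using tm(2)[OF axB] tm(2)[OF a2B(1)] Y_def Q2_def by metis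
    then have "x = \<alpha> a2" using aa[OF xB] by metis
    then have "X = P2" using X_def P2_def by simp
    then show False using h1 XQ1 Q1P2 by simp
  qed
  have ord: "P1 < X" "X < Q1" "Q1 < P2" "P2 < Y" "Y < Q2" "Q2 < N"
    using h1 XQ1 Q1P2 Q1P2s h3 YQ2 tm(1)[OF a2B(1)] Q2_def by auto
  have v: "w ! P1 = ed a1" "w ! X = ed x" "w ! Q1 = ed a1" "w ! P2 = ed a2" "w ! Y = ed x" "w ! Q2 = ed a2"
    using w_nth_tm a1B a2B xB axB ed_a P1_def Q1_def P2_def Q2_def X_def Y_def by auto
  show ?thesis unfolding subseq6
    apply (rule exI[of _ P1], rule exI[of _ X], rule exI[of _ Q1], rule exI[of _ P2], rule exI[of _ Y], rule exI[of _ Q2])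
    using ord v w_len by simp
qed

lemma partB:
  assumes T: "\<not> tremaux B \<sigma> \<alpha> r S"
  shows "\<exists>f e1 e2. e1 \<in> S \<and> e2 \<in> S \<and> subseq [e1, f, e1, e2, f, e2] w"
proof -
  obtain b where b: "b \<in> B" "\<not> anc (vt b) (vt (\<alpha> b))" "\<not> anc (vt (\<alpha> b)) (vt b)"
    using T by (auto simp: tremaux_def)
  have abB: "\<alpha> b \<in> B" using a_in[OF b(1)] .
  obtain a1 where a1: "child a1" "vt b \<in> D (ed a1)" "vt (\<alpha> b) \<notin> D (ed a1)"
    using D_anc[OF b(1) abB] b(2) by blast
  obtain a2 where a2: "child a2" "vt (\<alpha> b) \<in> D (ed a2)" "vt b \<notin> D (ed a2)"
    using D_anc[OF abB b(1)] b(3) by blast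
  have S1: "ed a1 \<in> S" "ed a2 \<in> S" using a1(1) a2(1) by (auto simp: child_def)
  have f1: "b \<in> Fl (ed a1)" "\<alpha> b \<notin> Fl (ed a1)" "\<alpha> b \<in> Fl (ed a2)" "b \<notin> Fl (ed a2)"
    using a1 a2 b(1) abB by (auto simp: Fl_def)
  show ?thesis
  proof (cases "tm b < tm (\<alpha> b)")
    case True
    show ?thesis using B_aux[OF b(1) True a1(1) a2(1) f1] S1 by blast
  next
    case False
    then have lt: "tm (\<alpha> b) < tm (\<alpha> (\<alpha> b))" using tm_neq[OF b(1)] aa[OF b(1)] by simp
    have f2: "\<alpha> b \<in> Fl (ed a2)" "\<alpha> (\<alpha> b) \<notin> Fl (ed a2)" "\<alpha> (\<alpha> b) \<in> Fl (ed a1)" "\<alpha> b \<notin> Fl (ed a1)"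
      using f1 aa[OF b(1)] by auto
    show ?thesis using B_aux[OF abB lt a2(1) a1(1) f2] S1 by blast
  qed
qed

lemma partC:
  assumes "subseq [e1, f, e1, e2, f, e2] w"
  shows "Lambda_arc w e1 f \<and> Lambda_arc w f e2"
proof -
  obtain i1 i2 i3 i4 i5 i6 where i: "i1 < i2" "i2 < i3" "i3 < i4" "i4 < i5" "i5 < i6" "i6 < length w"
    "w ! i1 = e1" "w ! i2 = f" "w ! i3 = e1" "w ! i4 = e2" "w ! i5 = f" "w ! i6 = e2"
    using assms unfolding subseq6 by blast
  have "Lambda_arc w e1 f" unfolding Lambda_arc_def subseq4
    apply (rule exI[of _ i1], rule exI[of _ i2], rule exI[of _ i3], rule exI[of _ i5])
    using i by simp
  moreover have "Lambda_arc w f e2" unfolding Lambda_arc_def subseq4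
    apply (rule exI[of _ i2], rule exI[of _ i4], rule exI[of _ i5], rule exI[of _ i6])
    using i by simp
  ultimately show ?thesis by simp
qed

end

theorem lemma14:
  fixes B :: "'b set" and \<sigma> \<alpha> :: "'b \<Rightarrow> 'b" and r :: 'b and S :: "'b set set"
  assumes "is_map B \<sigma> \<alpha>"
    and "r \<in> B"
    and "spanning_tree B \<sigma> \<alpha> S"
  shows "(tremaux B \<sigma> \<alpha> r S \<longleftrightarrow>
           \<not> (\<exists>f e1 e2. e1 \<in> S \<and> e2 \<in> S \<and>
                 Lambda_arc (dow B \<sigma> \<alpha> r S) e1 f \<and> Lambda_arc (dow B \<sigma> \<alpha> r S) f e2))
       \<and> (tremaux B \<sigma> \<alpha> r S \<longleftrightarrow>
           \<not> (\<exists>f e1 e2. e1 \<in> S \<and> e2 \<in> S \<and>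
                 subseq [e1, f, e1, e2, f, e2] (dow B \<sigma> \<alpha> r S)))"
proof -
  interpret TM B \<sigma> \<alpha> r S using assms by unfold_locales
  have A: "tremaux B \<sigma> \<alpha> r S \<Longrightarrow> \<not> (\<exists>f e1 e2. e1 \<in> S \<and> e2 \<in> S \<and>
                 Lambda_arc (dow B \<sigma> \<alpha> r S) e1 f \<and> Lambda_arc (dow B \<sigma> \<alpha> r S) f e2)"
    using partA by blast
  have Bp: "\<not> tremaux B \<sigma> \<alpha> r S \<Longrightarrow> (\<exists>f e1 e2. e1 \<in> S \<and> e2 \<in> S \<and>
                 subseq [e1, f, e1, e2, f, e2] (dow B \<sigma> \<alpha> r S))"
    using partB by blast
  have C: "(\<exists>f e1 e2. e1 \<in> S \<and> e2 \<in> S \<and> subseq [e1, f, e1, e2, f, e2] (dow B \<sigma> \<alpha> r S)) \<Longrightarrow>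
     (\<exists>f e1 e2. e1 \<in> S \<and> e2 \<in> S \<and>
                 Lambda_arc (dow B \<sigma> \<alpha> r S) e1 f \<and> Lambda_arc (dow B \<sigma> \<alpha> r S) f e2)"
    using partC by blast
  show ?thesis using A Bp C by blast
qed


end
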